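(* Let $\mathbb P$ be the law of a stationary simple point process on $\mathbb R^d$ with finite positive intensity $m$ and $\mathbb P(\xi\ne\emptyset)=1$, and let $p\in[1,\infty)$. Then $\mathbb E_0\big[\deg_{\mathrm{DT}(\xi)}(0)^p\big]<+\infty$ in each of the following cases: (C1) for some $\bar\alpha>0$ and $C_0>0$, $\sup_{x\in\mathbb R^d}\mathbb P_0(\xi(\Lambda_\ell(x))=0)\le C_0\ell^{-\bar\alpha}$ for all $\ell>0$, and $\rho_\gamma<+\infty$ for some $\gamma>p+1$ with $\bar\alpha>\frac{dp(\gamma-1)}{\gamma-1-p}$; (C2) $\rho_{1+p}<+\infty$ and $\mathbb P$ has finite range of dependence; (C3) $\rho_{1+p}<+\infty$, $\mathbb P$ has positive association, and Condition $C(\alpha)$ holds for some $\alpha>dp$.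
   Context: $\mathcal N$ = locally finite subsets of $\mathbb R^d$, identified with counting measures ($\xi(A)=\#(\xi\cap A)$), $\sigma$-algebra generated by $\xi\mapsto\xi(A)$; $\tau_x\xi=\xi-x$; stationarity: $\mathbb P(\tau_xA)=\mathbb P(A)$; $m=\mathbb E[\xi([0,1]^d)]$. $\Lambda_\ell(x)=x+[-\ell,\ell]^d$, $\Lambda_\ell=\Lambda_\ell(0)$. $\mathrm{DT}(\xi)$: graph on $\xi$ with edges $\{x,y\}$, $x\ne y$, whose Voronoi cells $\mathrm{Vor}(x|\xi)=\{y:|y-x|\le|y-z|\ \forall z\in\xi\}$ share a $(d-1)$-dimensional face; $\deg_{\mathrm{DT}(\xi)}(0)$ is the degree of the vertex $0$. $\rho_\gamma=\mathbb E[\xi([0,1]^d)^\gamma]$. Palm distribution $\mathbb P_0(A)=\frac1m\int d\mathbb P(\xi)\sum_{x\in\xi\cap[0,1]^d}\mathbf 1_A(\tau_x\xi)$ (concentrated on $\{0\in\xi\}$), expectation $\mathbb E_0$. Condition $C(\alpha)$: $\exists\kappa>0$ with $\mathbb P(\xi(\Lambda_\ell)=0)\le\kappa\ell^{-\alpha}$ for $\ell\ge1$. Finite range of dependence: $\exists L>0$ such that $\xi\cap A$, $\xi\cap B$ are $\mathbb P$-independent for Borel $A,B$ at distance $\ge L$. Positive association: $\mathrm{Cov}_{\mathbb P}(f(\xi(A_1),\dots,\xi(A_n)),g(\xi(B_1),\dots,\xi(B_k)))\ge0$ for weakly increasing $f,g$ and pairwise disjoint bounded Borel sets, whenever both have finite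 second moments. *)

theory Defs
  imports "HOL-Analysis.Analysis" "HOL-Probability.Probability"
begin

definition locfin :: "'a::euclidean_space set \<Rightarrow> bool" where
  "locfin \<xi> \<longleftrightarrow> (\<forall>K. bounded K \<longrightarrow> finite (\<xi> \<inter> K))"

definition N_space :: "'a::euclidean_space set measure" where
  "N_space = sigma {\<xi>. locfin \<xi>}
     {{\<xi>. locfin \<xi> \<and> card (\<xi> \<inter> A) = n} | A n. A \<in> sets borel \<and> bounded A}"

definition translate :: "'a::euclidean_space \<Rightarrow> 'a set \<Rightarrow> 'a set" where
  "translate x \<xi> = (\<lambda>y. y - x) ` \<xi>"

definition unit_cube :: "'a::euclidean_space set" where
  "unit_cube = cbox 0 One"

definition Lambda :: "real \<Rightarrow> 'a::euclidean_space \<Rightarrow> 'a set" where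
  "Lambda l x = cbox (x - l *\<^sub>R One) (x + l *\<^sub>R One)"

definition stationary :: "'a::euclidean_space set measure \<Rightarrow> bool" where
  "stationary P \<longleftrightarrow> (\<forall>x A. A \<in> sets P \<longrightarrow> measure P (translate x ` A) = measure P A)"

definition intensity :: "'a::euclidean_space set measure \<Rightarrow> real" where
  "intensity P = (\<integral>\<xi>. real (card (\<xi> \<inter> unit_cube)) \<partial>P)"

definition rho :: "'a::euclidean_space set measure \<Rightarrow> real \<Rightarrow> ennreal" where
  "rho P \<gamma> = (\<integral>\<^sup>+\<xi>. ennreal (real (card (\<xi> \<inter> unit_cube)) powr \<gamma>) \<partial>P)"

definition palm_exp :: "'a::euclidean_space set measure \<Rightarrow> ('a set \<Rightarrow> ennreal) \<Rightarrow> ennreal" where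
  "palm_exp P f = ennreal (1 / intensity P) *
     (\<integral>\<^sup>+\<xi>. (\<Sum>x\<in>\<xi> \<inter> unit_cube. f (translate x \<xi>)) \<partial>P)"

definition palm_prob :: "'a::euclidean_space set measure \<Rightarrow> 'a set set \<Rightarrow> ennreal" where
  "palm_prob P A = palm_exp P (indicator A)"

definition vor :: "'a::euclidean_space set \<Rightarrow> 'a \<Rightarrow> 'a set" where
  "vor \<xi> x = {y. \<forall>z\<in>\<xi>. dist y x \<le> dist y z}"

definition dt_edge :: "'a::euclidean_space set \<Rightarrow> 'a \<Rightarrow> 'a \<Rightarrow> bool" where
  "dt_edge \<xi> x y \<longleftrightarrow> x \<in> \<xi> \<and> y \<in> \<xi> \<and> x \<noteq> y \<and>
     (\<exists>F. F face_of vor \<xi> x \<and> F face_of vor \<xi> y \<and> aff_dim F = int DIM('a) - 1)"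

definition deg0_pow :: "'a::euclidean_space set \<Rightarrow> real \<Rightarrow> ennreal" where
  "deg0_pow \<xi> p = (if finite {y. dt_edge \<xi> 0 y}
      then ennreal (real (card {y. dt_edge \<xi> 0 y}) powr p) else \<infinity>)"

definition condC :: "'a::euclidean_space set measure \<Rightarrow> real \<Rightarrow> bool" where
  "condC P \<alpha> \<longleftrightarrow> (\<exists>\<kappa>>0. \<forall>l\<ge>1.
     measure P {\<xi>\<in>space P. \<xi> \<inter> Lambda l 0 = {}} \<le> \<kappa> * l powr (-\<alpha>))"

definition finite_range_dep :: "'a::euclidean_space set measure \<Rightarrow> bool" where
  "finite_range_dep P \<longleftrightarrow> (\<exists>L>0. \<forall>A B. A \<in> sets borel \<longrightarrow> B \<in> sets borel \<longrightarrow>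
     (\<forall>a\<in>A. \<forall>b\<in>B. dist a b \<ge> L) \<longrightarrow>
     prob_space.indep_var P N_space (\<lambda>\<xi>. \<xi> \<inter> A) N_space (\<lambda>\<xi>. \<xi> \<inter> B))"

definition pos_assoc :: "'a::euclidean_space set measure \<Rightarrow> bool" where
  "pos_assoc P \<longleftrightarrow> (\<forall>(As::'a set list) (Bs::'a set list) (f::nat list \<Rightarrow> real) (g::nat list \<Rightarrow> real).
     (\<forall>A\<in>set As. A \<in> sets borel \<and> bounded A) \<longrightarrow>
     (\<forall>B\<in>set Bs. B \<in> sets borel \<and> bounded B) \<longrightarrow>
     disjoint_family_on (\<lambda>i. As ! i) {..<length As} \<longrightarrow>
     disjoint_family_on (\<lambda>i. Bs ! i) {..<length Bs} \<longrightarrow>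
     (\<forall>xs ys. length xs = length As \<longrightarrow> list_all2 (\<le>) xs ys \<longrightarrow> f xs \<le> f ys) \<longrightarrow>
     (\<forall>xs ys. length xs = length Bs \<longrightarrow> list_all2 (\<le>) xs ys \<longrightarrow> g xs \<le> g ys) \<longrightarrow>
     integrable P (\<lambda>\<xi>. (f (map (\<lambda>A. card (\<xi> \<inter> A)) As))\<^sup>2) \<longrightarrow>
     integrable P (\<lambda>\<xi>. (g (map (\<lambda>B. card (\<xi> \<inter> B)) Bs))\<^sup>2) \<longrightarrow>
     (\<integral>\<xi>. f (map (\<lambda>A. card (\<xi> \<inter> A)) As) * g (map (\<lambda>B. card (\<xi> \<inter> B)) Bs) \<partial>P)
       - (\<integral>\<xi>. f (map (\<lambda>A. card (\<xi> \<inter> A)) As) \<partial>P) * (\<integral>\<xi>. g (map (\<lambda>B. card (\<xi> \<inter> B)) Bs) \<partial>P)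
       \<ge> 0)"

end

theory Submission
  imports Defs
begin

definition cnt :: "'a::euclidean_space set \<Rightarrow> 'a set \<Rightarrow> nat" where
  "cnt A \<xi> = card (\<xi> \<inter> A)"

lemma space_N: "space N_space = {\<xi>. locfin \<xi>}"
  unfolding N_space_def by (rule space_measure_of) auto

lemma gen_in_N:
  assumes "bounded A" "A \<in> sets borel"
  shows "{\<xi>. locfin \<xi> \<and> card (\<xi> \<inter> A) = n} \<in> sets N_space"
  unfolding N_space_def
  by (rule in_measure_of) (use assms in auto)

lemma cnt_meas_N:
  assumes "bounded A" "A \<in> sets borel"
  shows "cnt A \<in> measurable N_space (count_space UNIV)"
proof -
  have "cnt A -` {n} \<inter> space N_space = {\<xi>. locfin \<xi> \<and> card (\<xi> \<inter> A) = n}" for n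
    by (auto simp: space_N cnt_def)
  then show ?thesis
    by (auto simp: measurable_count_space_eq2_countable gen_in_N[OF assms])
qed

lemma translate_image_eq: "translate x \<xi> \<inter> B = (\<lambda>y. y - x) ` (\<xi> \<inter> (+) x ` B)"
  unfolding translate_def
proof (intro equalityI subsetI)
  fix z assume "z \<in> (\<lambda>y. y - x) ` \<xi> \<inter> B"
  then obtain y where y: "y \<in> \<xi>" "z = y - x" "z \<in> B" by auto
  then have "y \<in> (+) x ` B" by (intro image_eqI[of _ _ z]) auto
  with y show "z \<in> (\<lambda>y. y - x) ` (\<xi> \<inter> (+) x ` B)" by blast
next
  fix z assume "z \<in> (\<lambda>y. y - x) ` (\<xi> \<inter> (+) x ` B)"
  then obtain y where y: "y \<in> \<xi>" "z = y - x" "y \<in> (+) x ` B" by auto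
  then show "z \<in> (\<lambda>y. y - x) ` \<xi> \<inter> B" by auto
qed

lemma translate_locfin:
  assumes "locfin \<xi>" shows "locfin (translate x \<xi>)"
  unfolding locfin_def
proof (intro allI impI)
  fix K :: "'a set" assume "bounded K"
  then have "bounded ((+) x ` K)" by (rule bounded_translation)
  then have "finite (\<xi> \<inter> (+) x ` K)" using assms by (auto simp: locfin_def)
  then show "finite (translate x \<xi> \<inter> K)" unfolding translate_image_eq by simp
qed

lemma card_translate: "card (translate x \<xi> \<inter> B) = card (\<xi> \<inter> (+) x ` B)"
  unfolding translate_image_eq by (rule card_image) (auto simp: inj_on_def)

lemma translate_translate: "translate x (translate y \<xi>) = translate (x + y) \<xi>"
  unfolding translate_def by (auto simp: image_image algebra_simps)

lemma translate_0: "translate 0 \<xi> = \<xi>"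
  unfolding translate_def by simp

lemma borel_translate:
  fixes A :: "'a::euclidean_space set"
  assumes "A \<in> sets borel" shows "(+) v ` A \<in> sets borel"
proof -
  have "(+) v ` A = (\<lambda>y. y - v) -` A \<inter> space borel"
  proof (intro equalityI subsetI)
    fix z assume "z \<in> (\<lambda>y. y - v) -` A \<inter> space borel"
    then show "z \<in> (+) v ` A" by (intro image_eqI[of _ _ "z - v"]) auto
  qed auto
  also have "\<dots> \<in> sets borel"
    by (rule measurable_sets[OF _ assms]) measurable
  finally show ?thesis .
qed

locale pp =
  fixes P :: "'a::euclidean_space set measure"
  assumes prob: "prob_space P"
    and setsP: "sets P = sets N_space"
    and stat: "stationary P"
begin

interpretation prob_space P by (rule prob)

lemma spaceP: "space P = {\<xi>. locfin \<xi>}"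
  using sets_eq_imp_space_eq[OF setsP] space_N by simp

lemma measP: "measurable P = measurable N_space"
  by (intro ext measurable_cong_sets setsP refl)

lemma cnt_meas:
  assumes "bounded A" "A \<in> sets borel"
  shows "cnt A \<in> measurable P (count_space UNIV)"
  by (subst measP) (rule cnt_meas_N[OF assms])

lemma sets_cnt:
  assumes "bounded A" "A \<in> sets borel"
  shows "{\<xi>\<in>space P. cnt A \<xi> = n} \<in> sets P"
proof -
  have "{\<xi>\<in>space P. cnt A \<xi> = n} = cnt A -` {n} \<inter> space P" by auto
  then show ?thesis using measurable_sets[OF cnt_meas[OF assms], of "{n}"] by simp
qed

lemma stat_cnt:
  assumes A: "bounded A" "A \<in> sets borel"
  shows "distr P (count_space UNIV) (cnt ((+) v ` A)) = distr P (count_space UNIV) (cnt A)"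
proof (rule measure_eqI_countable[where A=UNIV])
  fix n :: nat
  have B: "bounded ((+) v ` A)" "(+) v ` A \<in> sets borel"
    using A by (auto intro: bounded_translation borel_translate)
  define S where "S = cnt ((+) v ` A) -` {n} \<inter> space P"
  have S: "S \<in> sets P" unfolding S_def
    by (rule measurable_sets[OF cnt_meas[OF B]]) auto
  have img: "translate v ` S = cnt A -` {n} \<inter> space P"
  proof (intro equalityI subsetI)
    fix \<eta> assume "\<eta> \<in> translate v ` S"
    then obtain \<xi> where "\<xi> \<in> S" "\<eta> = translate v \<xi>" by auto
    then show "\<eta> \<in> cnt A -` {n} \<inter> space P"
      by (auto simp: S_def spaceP translate_locfin cnt_def card_translate)
  next
    fix \<eta> assume "\<eta> \<in> cnt A -` {n} \<inter> space P"
    then have h: "\<eta> \<in> space P" "cnt A \<eta> = n" by auto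
    have "translate v (translate (-v) \<eta>) = \<eta>" by (simp add: translate_translate translate_0)
    moreover have "translate (-v) \<eta> \<in> S"
      using h by (auto simp: S_def spaceP translate_locfin cnt_def card_translate image_image)
    ultimately show "\<eta> \<in> translate v ` S" by (metis image_eqI)
  qed
  have "measure P (translate v ` S) = measure P S"
    using stat S by (auto simp: stationary_def)
  then have "emeasure P (cnt A -` {n} \<inter> space P) = emeasure P S"
    by (simp add: img emeasure_eq_measure)
  then show "emeasure (distr P (count_space UNIV) (cnt ((+) v ` A))) {n} =
      emeasure (distr P (count_space UNIV) (cnt A)) {n}"
    using cnt_meas[OF A] cnt_meas[OF B]
    by (simp add: emeasure_distr S_def)
qed auto

lemma stat_nn_integral:
  assumes A: "bounded A" "A \<in> sets borel"
  shows "(\<integral>\<^sup>+\<xi>. g (cnt ((+) v ` A) \<xi>) \<partial>P) = (\<integral>\<^sup>+\<xi>. g (cnt A \<xi>) \<partial>P)"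
proof -
  have B: "bounded ((+) v ` A)" "(+) v ` A \<in> sets borel"
    using A by (auto intro: bounded_translation borel_translate)
  have "(\<integral>\<^sup>+\<xi>. g (cnt ((+) v ` A) \<xi>) \<partial>P) = (\<integral>\<^sup>+n. g n \<partial>distr P (count_space UNIV) (cnt ((+) v ` A)))"
    by (rule nn_integral_distr[symmetric]) (auto intro: cnt_meas[OF B])
  also have "\<dots> = (\<integral>\<^sup>+n. g n \<partial>distr P (count_space UNIV) (cnt A))"
    by (simp add: stat_cnt[OF A])
  also have "\<dots> = (\<integral>\<^sup>+\<xi>. g (cnt A \<xi>) \<partial>P)"
    by (rule nn_integral_distr) (auto intro: cnt_meas[OF A])
  finally show ?thesis .
qed

lemma stat_measure:
  assumes A: "bounded A" "A \<in> sets borel"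
  shows "measure P {\<xi>\<in>space P. cnt ((+) v ` A) \<xi> = n} = measure P {\<xi>\<in>space P. cnt A \<xi> = n}"
proof -
  have B: "bounded ((+) v ` A)" "(+) v ` A \<in> sets borel"
    using A by (auto intro: bounded_translation borel_translate)
  have "emeasure P {\<xi>\<in>space P. cnt ((+) v ` A) \<xi> = n} = (\<integral>\<^sup>+\<xi>. indicator {n} (cnt ((+) v ` A) \<xi>) \<partial>P)"
    by (subst nn_integral_indicator[symmetric], rule sets_cnt[OF B], rule nn_integral_cong) (simp add: indicator_def)
  also have "\<dots> = (\<integral>\<^sup>+\<xi>. indicator {n} (cnt A \<xi>) \<partial>P)" by (rule stat_nn_integral[OF A])
  also have "\<dots> = emeasure P {\<xi>\<in>space P. cnt A \<xi> = n}"
    by (subst nn_integral_indicator[symmetric], rule sets_cnt[OF A], rule nn_integral_cong) (simp add: indicator_def)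
  finally show ?thesis by (simp add: emeasure_eq_measure)
qed

end

lemma lam_mem: "w \<in> Lambda l c \<longleftrightarrow> (\<forall>b\<in>Basis. c \<bullet> b - l \<le> w \<bullet> b \<and> w \<bullet> b \<le> c \<bullet> b + l)"
  unfolding Lambda_def mem_box by (simp add: inner_diff_left inner_add_left)

lemma cube_mem: "x \<in> unit_cube \<longleftrightarrow> (\<forall>b\<in>Basis. 0 \<le> x \<bullet> b \<and> x \<bullet> b \<le> 1)"
  unfolding unit_cube_def mem_box by simp

lemma bounded_Lambda: "bounded (Lambda l c)"
  unfolding Lambda_def by simp

lemma borel_Lambda: "Lambda l c \<in> sets borel"
  unfolding Lambda_def by simp

lemma bounded_cube: "bounded unit_cube"
  unfolding unit_cube_def by simp

lemma borel_cube: "unit_cube \<in> sets borel"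
  unfolding unit_cube_def by simp

definition Kset :: "('a::euclidean_space \<Rightarrow> int) set" where
  "Kset = (Basis::'a set) \<rightarrow>\<^sub>E {- int (3 * DIM('a)) .. int (3 * DIM('a))}"

definition grid :: "real \<Rightarrow> ('a::euclidean_space \<Rightarrow> int) \<Rightarrow> 'a" where
  "grid h k = (\<Sum>b\<in>Basis. (h * of_int (k b)) *\<^sub>R b)"

lemma finite_Kset: "finite Kset"
  unfolding Kset_def by (intro finite_PiE) auto

lemma grid_inner: "b \<in> Basis \<Longrightarrow> grid h k \<bullet> b = h * of_int (k b)"
  unfolding grid_def by (rule inner_sum_left_Basis)

lemma round_bound:
  fixes y :: real and M :: int
  assumes "\<bar>y\<bar> \<le> of_int M"
  shows "- M \<le> round y \<and> round y \<le> M"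
proof -
  have h: "\<bar>of_int (round y) - y\<bar> \<le> 1/2" by (rule of_int_round_abs_le)
  then have "of_int (round y) < (of_int (M + 1) :: real)" "(of_int (- M - 1) :: real) < of_int (round y)"
    using assms by linarith+
  then have "round y < M + 1" "- M - 1 < round y" by (simp_all only: of_int_less_iff)
  then show ?thesis by linarith
qed

lemma grid_empty:
  fixes \<xi> :: "'a::euclidean_space set"
  assumes r: "2 * real DIM('a) < r" and z: "norm z = r" and x: "x \<in> unit_cube"
    and far: "\<forall>v\<in>\<xi>. r \<le> dist (z + x) v"
  shows "\<exists>k\<in>Kset. \<xi> \<inter> Lambda (r / real (3 * DIM('a))) (grid (r / real (3 * DIM('a))) k) = {}"
proof -
  define M :: nat where "M = 3 * DIM('a)"
  define h where "h = r / real M"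
  have Mpos: "real M > 0" unfolding M_def by simp
  have "0 \<le> 2 * real DIM('a)" by simp
  then have rpos: "r > 0" using r by linarith
  have hpos: "h > 0" unfolding h_def using Mpos rpos by simp
  have rM: "r = h * real M" unfolding h_def using Mpos by simp
  define k where "k = restrict (\<lambda>b. round (z \<bullet> b / h)) (Basis::'a set)"
  have kK: "k \<in> Kset" unfolding Kset_def
  proof (rule PiE_I)
    fix b :: 'a assume b: "b \<in> Basis"
    have "\<bar>z \<bullet> b\<bar> \<le> r" using Basis_le_norm[OF b, of z] z by simp
    then have "\<bar>z \<bullet> b\<bar> / h \<le> r / h" using hpos by (intro divide_right_mono) auto
    moreover have "r / h = real M" using rM hpos by simp
    moreover have "\<bar>z \<bullet> b / h\<bar> = \<bar>z \<bullet> b\<bar> / h" using hpos by simp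
    ultimately have "\<bar>z \<bullet> b / h\<bar> \<le> real M" by linarith
    then have "\<bar>z \<bullet> b / h\<bar> \<le> of_int (int M)" by simp
    from round_bound[OF this] show "k b \<in> {- int (3 * DIM('a)) .. int (3 * DIM('a))}"
      using b by (simp add: k_def M_def)
  qed (simp add: k_def)
  define g where "g = grid h k"
  have gk: "\<bar>g \<bullet> b - z \<bullet> b\<bar> \<le> h / 2" if b: "b \<in> Basis" for b
  proof -
    define y where "y = z \<bullet> b / h"
    have gb: "g \<bullet> b = h * of_int (round y)" using b by (simp add: g_def grid_inner k_def y_def)
    have ry: "\<bar>of_int (round y) - y\<bar> \<le> 1/2" by (rule of_int_round_abs_le)
    have zb: "z \<bullet> b = h * y" using hpos by (simp add: y_def)
    have "g \<bullet> b - z \<bullet> b = h * (of_int (round y) - y)" by (simp add: gb zb right_diff_distrib)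
    then have "\<bar>g \<bullet> b - z \<bullet> b\<bar> = h * \<bar>of_int (round y) - y\<bar>" using hpos by (simp add: abs_mult)
    also have "\<dots> \<le> h * (1/2)" using hpos ry by (intro mult_left_mono) auto
    finally show ?thesis by simp
  qed
  have "\<xi> \<inter> Lambda h g = {}"
  proof (rule ccontr)
    assume "\<xi> \<inter> Lambda h g \<noteq> {}"
    then obtain w where w: "w \<in> \<xi>" "w \<in> Lambda h g" by auto
    have cw: "\<bar>(z + x - w) \<bullet> b\<bar> \<le> h / 2 + h + 1" if b: "b \<in> Basis" for b
    proof -
      have "g \<bullet> b - h \<le> w \<bullet> b" "w \<bullet> b \<le> g \<bullet> b + h" using w(2) b unfolding lam_mem by auto
      moreover have "0 \<le> x \<bullet> b" "x \<bullet> b \<le> 1" using x b unfolding cube_mem by auto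
      moreover have "(z + x - w) \<bullet> b = (z \<bullet> b - g \<bullet> b) + (g \<bullet> b - w \<bullet> b) + x \<bullet> b"
        by (simp add: inner_diff_left inner_add_left)
      moreover note gk[OF b]
      ultimately show ?thesis by linarith
    qed
    have "dist (z + x) w = norm (z + x - w)" by (simp add: dist_norm)
    also have "\<dots> \<le> (\<Sum>b\<in>Basis. \<bar>(z + x - w) \<bullet> b\<bar>)" by (rule norm_le_l1)
    also have "\<dots> \<le> (\<Sum>b\<in>(Basis::'a set). h / 2 + h + 1)" by (intro sum_mono cw)
    also have "\<dots> = real DIM('a) * (h / 2 + h + 1)" by simp
    also have "\<dots> = real DIM('a) * (3 / 2 * h) + real DIM('a)" by (simp add: distrib_left)
    also have "real DIM('a) * (3 / 2 * h) = r / 2"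
    proof -
      have "real DIM('a) * (3 / 2 * h) = (3 * real DIM('a)) * h / 2" by simp
      also have "3 * real DIM('a) = real M" by (simp add: M_def)
      finally show ?thesis using rM by (simp add: mult.commute)
    qed
    finally have "dist (z + x) w < r" using r by simp
    with far w(1) show False by force
  qed
  then show ?thesis using kK unfolding g_def h_def M_def by blast
qed

lemma scale_ball:
  fixes z :: "'a::euclidean_space"
  assumes far: "\<forall>w\<in>\<eta>. norm z \<le> dist z w" and r: "0 < r" "r \<le> norm z"
  shows "\<exists>z'. norm z' = r \<and> (\<forall>w\<in>\<eta>. r \<le> dist z' w)"
proof -
  have nz: "norm z > 0" using r(1) r(2) by linarith
  define z' where "z' = (r / norm z) *\<^sub>R z"
  have n': "norm z' = r" using nz r by (simp add: z'_def)
  have dzz: "dist z z' = norm z - r"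
  proof -
    have "z - z' = (1 - r / norm z) *\<^sub>R z" by (simp add: z'_def algebra_simps)
    then have "dist z z' = \<bar>1 - r / norm z\<bar> * norm z" by (simp add: dist_norm)
    also have "\<bar>1 - r / norm z\<bar> = 1 - r / norm z" using r nz by (simp add: field_simps)
    also have "(1 - r / norm z) * norm z = norm z - r" using nz by (simp add: field_simps)
    finally show ?thesis .
  qed
  have "r \<le> dist z' w" if "w \<in> \<eta>" for w
  proof -
    have "norm z \<le> dist z w" using far that by blast
    also have "dist z w \<le> dist z z' + dist z' w" by (rule dist_triangle)
    finally show ?thesis using dzz by simp
  qed
  with n' show ?thesis by blast
qed

lemma nb_geom:
  fixes \<eta> :: "'a::euclidean_space set"
  assumes "dt_edge \<eta> 0 y"
  shows "y \<noteq> 0 \<and> y \<in> \<eta> \<and> (\<exists>z. norm y \<le> 2 * norm z \<and> (\<forall>w\<in>\<eta>. norm z \<le> dist z w))"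
proof -
  from assms obtain F where h: "0 \<in> \<eta>" "y \<in> \<eta>" "y \<noteq> 0" "F face_of vor \<eta> 0" "F face_of vor \<eta> y"
      "aff_dim F = int DIM('a) - 1"
    unfolding dt_edge_def by auto
  have "F \<noteq> {}"
  proof
    assume "F = {}"
    then have "aff_dim F = -1" by simp
    moreover have "DIM('a) \<ge> 1" using DIM_positive[where 'a='a] by linarith
    then have "int DIM('a) \<ge> 1" by linarith
    ultimately show False using h(6) by simp
  qed
  then obtain z where zF: "z \<in> F" by auto
  have z0: "z \<in> vor \<eta> 0" and zy: "z \<in> vor \<eta> y"
    using zF face_of_imp_subset[OF h(4)] face_of_imp_subset[OF h(5)] by auto
  have far: "\<forall>w\<in>\<eta>. norm z \<le> dist z w" using z0 by (auto simp: vor_def dist_norm)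
  have "dist z y \<le> dist z 0" using zy h(1) by (auto simp: vor_def)
  then have "norm y \<le> 2 * norm z"
    using dist_triangle[of y 0 z] by (simp add: dist_commute dist_norm)
  with far h show ?thesis by blast
qed

lemma suminf_inf:
  fixes f :: "nat \<Rightarrow> ennreal"
  assumes "\<And>N. \<exists>j\<ge>N. 1 \<le> f j"
  shows "suminf f = \<infinity>"
proof (rule ccontr)
  assume "suminf f \<noteq> \<infinity>"
  then have "suminf f < top" by (simp add: top.not_eq_extremum)
  then obtain n where n: "suminf f < of_nat n" using ennreal_Ex_less_of_nat by blast
  have inf: "infinite {j. 1 \<le> f j}"
    unfolding infinite_nat_iff_unbounded_le using assms by blast
  obtain B where B: "finite B" "card B = n" "B \<subseteq> {j. 1 \<le> f j}"
    using infinite_arbitrarily_large[OF inf] by blast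
  have "of_nat n = (\<Sum>j\<in>B. (1::ennreal))" using B by simp
  also have "\<dots> \<le> sum f B" using B by (intro sum_mono) auto
  also have "\<dots> \<le> suminf f" by (rule sum_le_suminf[OF summableI B(1)]) auto
  finally show False using n by simp
qed

lemma dyadic:
  fixes t :: real
  assumes "1 \<le> t"
  shows "\<exists>j::nat. 2 ^ j \<le> t \<and> t < 2 ^ (j + 1)"
proof -
  obtain n :: nat where "t < 2 ^ n" using real_arch_pow[of 2 t] by auto
  define m where "m = (LEAST n::nat. t < 2 ^ n)"
  have m: "t < 2 ^ m" unfolding m_def by (rule LeastI) fact
  have m0: "m \<noteq> 0" using m assms by (intro notI) simp
  have "\<not> t < 2 ^ (m - 1)" unfolding m_def by (rule not_less_Least) (use m0 m_def in simp)
  then show ?thesis using m m0 by (intro exI[of _ "m - 1"]) simp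
qed

definition Bterm :: "real \<Rightarrow> real \<Rightarrow> nat \<Rightarrow> 'a::euclidean_space set \<Rightarrow> ennreal" where
  "Bterm S p j \<xi> = (\<Sum>k\<in>Kset. ennreal (of_bool (cnt (Lambda (S * 2 ^ j / real (3 * DIM('a)))
       (grid (S * 2 ^ j / real (3 * DIM('a))) k)) \<xi> = 0)) *
       ennreal (real (cnt (Lambda (4 * S * 2 ^ j + 1) 0) \<xi>) powr p))"

definition Bd :: "real \<Rightarrow> real \<Rightarrow> 'a::euclidean_space set \<Rightarrow> ennreal" where
  "Bd S p \<xi> = ennreal (real (cnt (Lambda (2 * S + 1) 0) \<xi>) powr p) + (\<Sum>j. Bterm S p j \<xi>)"

lemma Bterm_ge:
  fixes \<xi> :: "'a::euclidean_space set"
  assumes "k \<in> Kset" "\<xi> \<inter> Lambda (S * 2 ^ j / real (3 * DIM('a))) (grid (S * 2 ^ j / real (3 * DIM('a))) k) = {}"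
  shows "ennreal (real (cnt (Lambda (4 * S * 2 ^ j + 1) 0) \<xi>) powr p) \<le> Bterm S p j \<xi>"
proof -
  have "cnt (Lambda (S * 2 ^ j / real (3 * DIM('a))) (grid (S * 2 ^ j / real (3 * DIM('a))) k)) \<xi> = 0"
    using assms(2) by (simp add: cnt_def)
  then show ?thesis unfolding Bterm_def
    by (intro member_le_sum[of k, OF _ _ finite_Kset, THEN order_trans[rotated]]) (use assms(1) in auto)
qed

lemma translate_mem: "y \<in> translate x \<xi> \<longleftrightarrow> y + x \<in> \<xi>"
  unfolding translate_def by (auto simp: image_iff) (metis add_diff_cancel)

lemma Ej_lemma:
  fixes \<xi> :: "'a::euclidean_space set"
  assumes y: "dt_edge (translate x \<xi>) 0 y" and S: "2 * real DIM('a) < S" and x: "x \<in> unit_cube"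
    and yj: "2 * (S * 2 ^ j) \<le> norm y"
  shows "\<exists>k\<in>Kset. \<xi> \<inter> Lambda (S * 2 ^ j / real (3 * DIM('a))) (grid (S * 2 ^ j / real (3 * DIM('a))) k) = {}"
proof -
  define \<eta> where "\<eta> = translate x \<xi>"
  obtain z where z: "norm y \<le> 2 * norm z" "\<forall>w\<in>\<eta>. norm z \<le> dist z w"
    using nb_geom[OF y] unfolding \<eta>_def by blast
  have "0 \<le> 2 * real DIM('a)" by simp
  then have Spos: "S > 0" using S by linarith
  have "(1::real) \<le> 2 ^ j" by simp
  then have "S \<le> S * 2 ^ j" using Spos by simp
  then have r: "2 * real DIM('a) < S * 2 ^ j" using S by linarith
  have rpos: "0 < S * 2 ^ j" using Spos by simp
  have "S * 2 ^ j \<le> norm z" using yj z(1) by linarith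
  from scale_ball[OF z(2) rpos this] obtain z' where z': "norm z' = S * 2 ^ j" "\<forall>w\<in>\<eta>. S * 2 ^ j \<le> dist z' w"
    by blast
  have far: "\<forall>v\<in>\<xi>. S * 2 ^ j \<le> dist (z' + x) v"
  proof
    fix v assume "v \<in> \<xi>"
    then have "v - x \<in> \<eta>" unfolding \<eta>_def translate_mem by simp
    then have "S * 2 ^ j \<le> dist z' (v - x)" using z'(2) by blast
    also have "dist z' (v - x) = dist (z' + x) v" by (simp add: dist_norm algebra_simps)
    finally show "S * 2 ^ j \<le> dist (z' + x) v" .
  qed
  show ?thesis by (rule grid_empty[OF r z'(1) x far])
qed

lemma D_box:
  fixes \<xi> :: "'a::euclidean_space set"
  assumes y: "dt_edge (translate x \<xi>) 0 y" and x: "x \<in> unit_cube" and t: "norm y \<le> t"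
  shows "y + x \<in> \<xi> \<inter> Lambda (t + 1) 0"
proof -
  have "y \<in> translate x \<xi>" using nb_geom[OF y] by blast
  then have "y + x \<in> \<xi>" by (simp add: translate_mem)
  moreover have "y + x \<in> Lambda (t + 1) 0" unfolding lam_mem
  proof
    fix b :: 'a assume b: "b \<in> Basis"
    have "\<bar>y \<bullet> b\<bar> \<le> t" using Basis_le_norm[OF b, of y] t by linarith
    moreover have "0 \<le> x \<bullet> b" "x \<bullet> b \<le> 1" using x b unfolding cube_mem by auto
    ultimately show "0 \<bullet> b - (t + 1) \<le> (y + x) \<bullet> b \<and> (y + x) \<bullet> b \<le> 0 \<bullet> b + (t + 1)"
      by (simp add: inner_add_left abs_le_iff)
  qed
  ultimately show ?thesis by blast
qed

lemma D_card:
  fixes \<xi> :: "'a::euclidean_space set"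
  assumes lf: "locfin \<xi>" and x: "x \<in> unit_cube"
    and t: "\<forall>y\<in>{y. dt_edge (translate x \<xi>) 0 y}. norm y \<le> t"
  shows "card {y. dt_edge (translate x \<xi>) 0 y} \<le> cnt (Lambda (t + 1) 0) \<xi>"
proof -
  define D where "D = {y. dt_edge (translate x \<xi>) 0 y}"
  have fin: "finite (\<xi> \<inter> Lambda (t + 1) 0)" using lf bounded_Lambda unfolding locfin_def by blast
  have sub: "(\<lambda>y. y + x) ` D \<subseteq> \<xi> \<inter> Lambda (t + 1) 0"
    using D_box[OF _ x] t unfolding D_def by blast
  have "card D = card ((\<lambda>y. y + x) ` D)" by (rule card_image[symmetric]) (auto simp: inj_on_def)
  also have "\<dots> \<le> card (\<xi> \<inter> Lambda (t + 1) 0)" by (rule card_mono[OF fin sub])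
  finally show ?thesis unfolding D_def cnt_def .
qed

lemma ennreal_powr_mono:
  assumes "a \<le> b" "0 \<le> p"
  shows "ennreal (real a powr p) \<le> ennreal (real b powr p)"
  using assms by (intro ennreal_leI powr_mono2) auto

lemma deg_bound:
  fixes \<xi> :: "'a::euclidean_space set"
  assumes lf: "locfin \<xi>" and xin: "x \<in> \<xi>" and x: "x \<in> unit_cube"
    and S: "2 * real DIM('a) < S" and p: "0 \<le> p"
  shows "deg0_pow (translate x \<xi>) p \<le> Bd S p \<xi>"
proof -
  define D where "D = {y. dt_edge (translate x \<xi>) 0 y}"
  have "0 \<le> 2 * real DIM('a)" by simp
  then have Spos: "S > 0" using S by linarith
  show ?thesis
  proof (cases "finite D")
    case True
    then have dp: "deg0_pow (translate x \<xi>) p = ennreal (real (card D) powr p)"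
      unfolding deg0_pow_def D_def by simp
    show ?thesis
    proof (cases "D = {}")
      case True
      then show ?thesis unfolding dp by simp
    next
      case False
      define t0 where "t0 = Max (norm ` D)"
      have t0: "\<forall>y\<in>D. norm y \<le> t0" unfolding t0_def using \<open>finite D\<close> by simp
      have "Max (norm ` D) \<in> norm ` D" using \<open>finite D\<close> False by (intro Max_in) auto
      then obtain y0 where y0: "y0 \<in> D" "norm y0 = t0"
        unfolding t0_def by auto
      show ?thesis
      proof (cases "t0 \<le> 2 * S")
        case True
        then have "\<forall>y\<in>D. norm y \<le> 2 * S" using t0 by force
        then have "card D \<le> cnt (Lambda (2 * S + 1) 0) \<xi>"
          using D_card[OF lf x] unfolding D_def by blast
        then have "ennreal (real (card D) powr p) \<le> ennreal (real (cnt (Lambda (2 * S + 1) 0) \<xi>) powr p)"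
          by (rule ennreal_powr_mono[OF _ p])
        then show ?thesis unfolding dp Bd_def by (rule add_increasing2[rotated]) simp
      next
        case False
        then have "1 \<le> t0 / (2 * S)" using Spos by simp
        from dyadic[OF this] obtain j :: nat where j: "2 ^ j \<le> t0 / (2 * S)" "t0 / (2 * S) < 2 ^ (j + 1)"
          by blast
        have j1: "2 * (S * 2 ^ j) \<le> norm y0" using j(1) Spos y0(2) by (simp add: field_simps)
        have j2: "t0 \<le> 4 * S * 2 ^ j" using j(2) Spos by (simp add: field_simps)
        obtain k where k: "k \<in> Kset" "\<xi> \<inter> Lambda (S * 2 ^ j / real (3 * DIM('a))) (grid (S * 2 ^ j / real (3 * DIM('a))) k) = {}"
          using Ej_lemma[OF _ S x j1] y0(1) unfolding D_def by blast
        have "\<forall>y\<in>D. norm y \<le> 4 * S * 2 ^ j" using t0 j2 by force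
        then have "card D \<le> cnt (Lambda (4 * S * 2 ^ j + 1) 0) \<xi>"
          using D_card[OF lf x] unfolding D_def by blast
        then have "ennreal (real (card D) powr p) \<le> ennreal (real (cnt (Lambda (4 * S * 2 ^ j + 1) 0) \<xi>) powr p)"
          by (rule ennreal_powr_mono[OF _ p])
        also have "\<dots> \<le> Bterm S p j \<xi>" by (rule Bterm_ge[OF k])
        also have "\<dots> \<le> (\<Sum>j. Bterm S p j \<xi>)"
          using sum_le_suminf[OF summableI, of "{j}" "\<lambda>j. Bterm S p j \<xi>"] by simp
        also have "\<dots> \<le> Bd S p \<xi>" unfolding Bd_def by simp
        finally show ?thesis unfolding dp .
      qed
    qed
  next
    case False
    have inf: "(\<Sum>j. Bterm S p j \<xi>) = \<infinity>"
    proof (rule suminf_inf)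
      fix N :: nat
      have lf': "locfin (translate x \<xi>)" by (rule translate_locfin[OF lf])
      have "D \<subseteq> translate x \<xi>" unfolding D_def using nb_geom by blast
      moreover have "finite (translate x \<xi> \<inter> cball 0 (2 * S * 2 ^ N))"
        using lf' unfolding locfin_def by simp
      ultimately have "finite (D \<inter> cball 0 (2 * S * 2 ^ N))"
        by (meson finite_subset Int_mono order_refl)
      moreover have "\<not> D \<subseteq> cball 0 (2 * S * 2 ^ N)"
      proof
        assume "D \<subseteq> cball 0 (2 * S * 2 ^ N)"
        then have "D = D \<inter> cball 0 (2 * S * 2 ^ N)" by blast
        with \<open>finite (D \<inter> cball 0 (2 * S * 2 ^ N))\<close> False show False by simp
      qed
      then obtain y where y: "y \<in> D" "y \<notin> cball 0 (2 * S * 2 ^ N)" by blast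
      then have yN: "2 * S * 2 ^ N < norm y" by simp
      have "(1::real) \<le> 2 ^ N" by simp
      then have "2 * S \<le> 2 * S * 2 ^ N" using Spos by simp
      then have "2 * S \<le> norm y" using yN by linarith
      then have "1 \<le> norm y / (2 * S)" using Spos by (simp add: field_simps)
      from dyadic[OF this] obtain j :: nat where j: "2 ^ j \<le> norm y / (2 * S)" "norm y / (2 * S) < 2 ^ (j + 1)"
        by blast
      have j1: "2 * (S * 2 ^ j) \<le> norm y" using j(1) Spos by (simp add: field_simps)
      have "norm y < 2 ^ (j + 1) * (2 * S)" using j(2) Spos by (simp add: pos_divide_less_eq)
      then have "2 ^ N * (2 * S) < 2 ^ (j + 1) * (2 * S)" using yN by (simp add: mult.commute)
      then have "(2::real) ^ N < 2 ^ (j + 1)" by (rule mult_right_less_imp_less) (use Spos in simp)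
      then have "N < j + 1" using power_less_imp_less_exp[of "2::real" N "j+1"] by simp
      then have jN: "N \<le> j" by simp
      obtain k where k: "k \<in> Kset" "\<xi> \<inter> Lambda (S * 2 ^ j / real (3 * DIM('a))) (grid (S * 2 ^ j / real (3 * DIM('a))) k) = {}"
        using Ej_lemma[OF _ S x j1] y(1) unfolding D_def by blast
      have "x \<in> Lambda (4 * S * 2 ^ j + 1) 0" unfolding lam_mem
      proof
        fix b :: 'a assume b: "b \<in> Basis"
        have "0 \<le> x \<bullet> b" "x \<bullet> b \<le> 1" using x b unfolding cube_mem by auto
        moreover have "0 \<le> 4 * S * 2 ^ j" using Spos by simp
        ultimately show "0 \<bullet> b - (4 * S * 2 ^ j + 1) \<le> x \<bullet> b \<and> x \<bullet> b \<le> 0 \<bullet> b + (4 * S * 2 ^ j + 1)"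
          by simp
      qed
      then have "x \<in> \<xi> \<inter> Lambda (4 * S * 2 ^ j + 1) 0" using xin by blast
      moreover have "finite (\<xi> \<inter> Lambda (4 * S * 2 ^ j + 1) 0)" using lf bounded_Lambda unfolding locfin_def by blast
      ultimately have "1 \<le> cnt (Lambda (4 * S * 2 ^ j + 1) 0) \<xi>" unfolding cnt_def
        by (metis card_0_eq empty_iff less_one not_le)
      then have "1 \<le> real (cnt (Lambda (4 * S * 2 ^ j + 1) 0) \<xi>) powr p"
        using p by (intro ge_one_powr_ge_zero) auto
      then have "1 \<le> ennreal (real (cnt (Lambda (4 * S * 2 ^ j + 1) 0) \<xi>) powr p)" by simp
      also have "\<dots> \<le> Bterm S p j \<xi>" by (rule Bterm_ge[OF k])
      finally show "\<exists>j\<ge>N. 1 \<le> Bterm S p j \<xi>" using jN by blast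
    qed
    show ?thesis unfolding Bd_def inf by simp
  qed
qed

context pp
begin

interpretation prob_space P by (rule prob)

lemma cntf_meas:
  assumes "bounded A" "A \<in> sets borel"
  shows "(\<lambda>\<xi>. g (cnt A \<xi>)) \<in> borel_measurable P"
  by (rule measurable_compose[OF cnt_meas[OF assms]]) simp

definition N0 :: "'a set \<Rightarrow> ennreal" where
  "N0 \<xi> = ennreal (real (cnt unit_cube \<xi>))"

definition Tjk :: "real \<Rightarrow> real \<Rightarrow> nat \<Rightarrow> ('a \<Rightarrow> int) \<Rightarrow> 'a set \<Rightarrow> ennreal" where
  "Tjk S p j k \<xi> = N0 \<xi> * (ennreal (of_bool (cnt (Lambda (S * 2 ^ j / real (3 * DIM('a)))
       (grid (S * 2 ^ j / real (3 * DIM('a))) k)) \<xi> = 0)) *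
       ennreal (real (cnt (Lambda (4 * S * 2 ^ j + 1) 0) \<xi>) powr p))"

lemma N0_meas: "N0 \<in> borel_measurable P"
  unfolding N0_def by (rule cntf_meas[OF bounded_cube borel_cube])

lemma Tjk_meas: "Tjk S p j k \<in> borel_measurable P"
  unfolding Tjk_def
  by (intro borel_measurable_times_ennreal N0_meas cntf_meas bounded_Lambda borel_Lambda)

lemma palm_reduce:
  assumes S: "2 * real DIM('a) < S" and p: "0 \<le> p"
  shows "palm_exp P (\<lambda>\<xi>. deg0_pow \<xi> p) \<le> ennreal (1 / intensity P) *
     ((\<integral>\<^sup>+\<xi>. N0 \<xi> * ennreal (real (cnt (Lambda (2 * S + 1) 0) \<xi>) powr p) \<partial>P) +
      (\<Sum>j. \<Sum>k\<in>Kset. \<integral>\<^sup>+\<xi>. Tjk S p j k \<xi> \<partial>P))"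
proof -
  have X0m: "(\<lambda>\<xi>. N0 \<xi> * ennreal (real (cnt (Lambda (2 * S + 1) 0) \<xi>) powr p)) \<in> borel_measurable P"
    by (intro borel_measurable_times_ennreal N0_meas cntf_meas bounded_Lambda borel_Lambda)
  have Bm: "(\<lambda>\<xi>. N0 \<xi> * Bterm S p j \<xi>) \<in> borel_measurable P" for j
  proof -
    have "(\<lambda>\<xi>. N0 \<xi> * Bterm S p j \<xi>) = (\<lambda>\<xi>. \<Sum>k\<in>Kset. Tjk S p j k \<xi>)"
      unfolding Bterm_def Tjk_def by (simp add: sum_distrib_left)
    moreover have "(\<lambda>\<xi>. \<Sum>k\<in>Kset. Tjk S p j k \<xi>) \<in> borel_measurable P"
      by (intro borel_measurable_sum Tjk_meas)
    ultimately show ?thesis by simp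
  qed
  have "(\<integral>\<^sup>+\<xi>. (\<Sum>x\<in>\<xi> \<inter> unit_cube. deg0_pow (translate x \<xi>) p) \<partial>P) \<le> (\<integral>\<^sup>+\<xi>. N0 \<xi> * Bd S p \<xi> \<partial>P)"
  proof (rule nn_integral_mono)
    fix \<xi> assume "\<xi> \<in> space P"
    then have lf: "locfin \<xi>" by (simp add: spaceP)
    have "(\<Sum>x\<in>\<xi> \<inter> unit_cube. deg0_pow (translate x \<xi>) p) \<le> (\<Sum>x\<in>\<xi> \<inter> unit_cube. Bd S p \<xi>)"
      by (intro sum_mono deg_bound[OF lf _ _ S p]) auto
    also have "\<dots> = of_nat (card (\<xi> \<inter> unit_cube)) * Bd S p \<xi>" by simp
    also have "\<dots> = N0 \<xi> * Bd S p \<xi>" by (simp add: N0_def cnt_def ennreal_of_nat_eq_real_of_nat)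
    finally show "(\<Sum>x\<in>\<xi> \<inter> unit_cube. deg0_pow (translate x \<xi>) p) \<le> N0 \<xi> * Bd S p \<xi>" .
  qed
  also have "(\<integral>\<^sup>+\<xi>. N0 \<xi> * Bd S p \<xi> \<partial>P) =
      (\<integral>\<^sup>+\<xi>. N0 \<xi> * ennreal (real (cnt (Lambda (2 * S + 1) 0) \<xi>) powr p) + (\<Sum>j. N0 \<xi> * Bterm S p j \<xi>) \<partial>P)"
    unfolding Bd_def by (simp add: distrib_left)
  also have "\<dots> = (\<integral>\<^sup>+\<xi>. N0 \<xi> * ennreal (real (cnt (Lambda (2 * S + 1) 0) \<xi>) powr p) \<partial>P) +
      (\<integral>\<^sup>+\<xi>. (\<Sum>j. N0 \<xi> * Bterm S p j \<xi>) \<partial>P)"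
    by (rule nn_integral_add[OF X0m]) (rule borel_measurable_suminf_order[OF Bm])
  also have "(\<integral>\<^sup>+\<xi>. (\<Sum>j. N0 \<xi> * Bterm S p j \<xi>) \<partial>P) = (\<Sum>j. \<integral>\<^sup>+\<xi>. N0 \<xi> * Bterm S p j \<xi> \<partial>P)"
    by (rule nn_integral_suminf[OF Bm])
  also have "(\<lambda>j. \<integral>\<^sup>+\<xi>. N0 \<xi> * Bterm S p j \<xi> \<partial>P) = (\<lambda>j. \<Sum>k\<in>Kset. \<integral>\<^sup>+\<xi>. Tjk S p j k \<xi> \<partial>P)"
  proof
    fix j
    have "(\<integral>\<^sup>+\<xi>. N0 \<xi> * Bterm S p j \<xi> \<partial>P) = (\<integral>\<^sup>+\<xi>. (\<Sum>k\<in>Kset. Tjk S p j k \<xi>) \<partial>P)"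
      unfolding Bterm_def Tjk_def by (simp add: sum_distrib_left)
    also have "\<dots> = (\<Sum>k\<in>Kset. \<integral>\<^sup>+\<xi>. Tjk S p j k \<xi> \<partial>P)"
      by (rule nn_integral_sum) (rule Tjk_meas)
    finally show "(\<integral>\<^sup>+\<xi>. N0 \<xi> * Bterm S p j \<xi> \<partial>P) = (\<Sum>k\<in>Kset. \<integral>\<^sup>+\<xi>. Tjk S p j k \<xi> \<partial>P)" .
  qed
  finally have main: "(\<integral>\<^sup>+\<xi>. (\<Sum>x\<in>\<xi> \<inter> unit_cube. deg0_pow (translate x \<xi>) p) \<partial>P) \<le>
     (\<integral>\<^sup>+\<xi>. N0 \<xi> * ennreal (real (cnt (Lambda (2 * S + 1) 0) \<xi>) powr p) \<partial>P) +
      (\<Sum>j. \<Sum>k\<in>Kset. \<integral>\<^sup>+\<xi>. Tjk S p j k \<xi> \<partial>P)" .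
  show ?thesis unfolding palm_exp_def by (rule mult_left_mono[OF main]) simp
qed

end

lemma power_mean:
  fixes a :: "'i \<Rightarrow> real"
  assumes K: "finite K" and a: "\<And>k. k \<in> K \<Longrightarrow> 0 \<le> a k" and s: "1 \<le> s"
  shows "(\<Sum>k\<in>K. a k) powr s \<le> real (card K) powr (s - 1) * (\<Sum>k\<in>K. a k powr s)"
proof -
  define K' where "K' = {k\<in>K. 0 < a k}"
  have K'K: "K' \<subseteq> K" unfolding K'_def by auto
  have finK': "finite K'" using K K'K finite_subset by blast
  have sum1: "(\<Sum>k\<in>K. a k) = (\<Sum>k\<in>K'. a k)"
    unfolding K'_def using K a by (intro sum.mono_neutral_right) force+
  have sum2: "(\<Sum>k\<in>K. a k powr s) = (\<Sum>k\<in>K'. a k powr s)"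
    unfolding K'_def using K a by (intro sum.mono_neutral_right) force+
  have nonneg: "0 \<le> (\<Sum>k\<in>K'. a k powr s)" by (intro sum_nonneg) simp
  show ?thesis
  proof (cases "K' = {}")
    case True
    then show ?thesis unfolding sum1 sum2 by simp
  next
    case False
    define n where "n = real (card K')"
    have npos: "n > 0" unfolding n_def using finK' False by (simp add: card_gt_0_iff)
    have "convex_on {0<..} (\<lambda>x::real. x powr s)" by (rule powr_convex[OF s])
    from convex_on_sum[OF finK' False this, of "\<lambda>_. 1 / n" a]
    have "(\<Sum>k\<in>K'. (1 / n) *\<^sub>R a k) powr s \<le> (\<Sum>k\<in>K'. (1 / n) * a k powr s)"
      using npos unfolding n_def by (auto simp: K'_def)
    then have "((\<Sum>k\<in>K'. a k) / n) powr s \<le> (\<Sum>k\<in>K'. a k powr s) / n"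
      by (simp add: sum_distrib_left[symmetric] sum_divide_distrib[symmetric])
    then have "(\<Sum>k\<in>K'. a k) powr s / n powr s \<le> (\<Sum>k\<in>K'. a k powr s) / n"
      by (simp add: powr_divide sum_nonneg K'_def)
    then have "(\<Sum>k\<in>K'. a k) powr s \<le> (\<Sum>k\<in>K'. a k powr s) / n * n powr s"
      using npos by (simp add: pos_divide_le_eq)
    also have "(\<Sum>k\<in>K'. a k powr s) / n * n powr s = n powr (s - 1) * (\<Sum>k\<in>K'. a k powr s)"
      using npos by (simp add: powr_diff field_simps)
    also have "\<dots> \<le> real (card K) powr (s - 1) * (\<Sum>k\<in>K'. a k powr s)"
      using npos s card_mono[OF K K'K] nonneg unfolding n_def
      by (intro mult_right_mono powr_mono2) auto
    finally show ?thesis unfolding sum1 sum2 .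
  qed
qed

lemma young_simple:
  fixes c a s :: real
  assumes "0 \<le> c" "0 \<le> a" "0 \<le> s"
  shows "c * a powr s \<le> c powr (s + 1) + a powr (s + 1)"
proof -
  have e1: "x powr (s + 1) = x * x powr s" if "0 \<le> x" for x :: real
    using that by (cases "x = 0") (auto simp: powr_add)
  show ?thesis
  proof (cases "c \<le> a")
    case True
    then have "c * a powr s \<le> a * a powr s" using assms by (intro mult_right_mono) auto
    moreover have "0 \<le> c * c powr s" "0 \<le> a * a powr s" using assms by simp_all
    ultimately show ?thesis using e1[OF assms(2)] e1[OF assms(1)] by linarith
  next
    case False
    then have "c * a powr s \<le> c * c powr s" using assms by (intro mult_left_mono powr_mono2) auto
    moreover have "0 \<le> c * c powr s" "0 \<le> a * a powr s" using assms by simp_all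
    ultimately show ?thesis using e1[OF assms(2)] e1[OF assms(1)] by linarith
  qed
qed

definition vecI :: "('a::euclidean_space \<Rightarrow> int) \<Rightarrow> 'a" where
  "vecI k = (\<Sum>b\<in>Basis. of_int (k b) *\<^sub>R b)"

definition Kc :: "real \<Rightarrow> ('a::euclidean_space \<Rightarrow> int) set" where
  "Kc R = (Basis::'a set) \<rightarrow>\<^sub>E {- \<lceil>R\<rceil> - 1 .. \<lceil>R\<rceil>}"

lemma vecI_inner: "b \<in> Basis \<Longrightarrow> vecI k \<bullet> b = of_int (k b)"
  unfolding vecI_def by (rule inner_sum_left_Basis)

lemma finite_Kc: "finite (Kc R)"
  unfolding Kc_def by (intro finite_PiE) auto

lemma card_Kc: "card (Kc R :: ('a::euclidean_space \<Rightarrow> int) set) = nat (2 * \<lceil>R\<rceil> + 2) ^ DIM('a)"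
  unfolding Kc_def by (simp add: card_PiE add.commute)

lemma card_Kc_bound:
  assumes "0 \<le> R"
  shows "real (card (Kc R :: ('a::euclidean_space \<Rightarrow> int) set)) \<le> (2 * R + 4) ^ DIM('a)"
proof -
  have c: "real_of_int \<lceil>R\<rceil> < R + 1" by linarith
  have c0: "0 \<le> \<lceil>R\<rceil>" using assms by simp
  have "real (nat (2 * \<lceil>R\<rceil> + 2)) = 2 * real_of_int \<lceil>R\<rceil> + 2" using c0 by simp
  also have "\<dots> \<le> 2 * R + 4" using c by linarith
  finally have "real (nat (2 * \<lceil>R\<rceil> + 2)) \<le> 2 * R + 4" .
  then have "real (nat (2 * \<lceil>R\<rceil> + 2)) ^ DIM('a) \<le> (2 * R + 4) ^ DIM('a)"
    by (intro power_mono) auto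
  then show ?thesis unfolding card_Kc by simp
qed

lemma Kc_nonempty: "0 \<le> R \<Longrightarrow> Kc R \<noteq> {}"
  unfolding Kc_def by (auto simp: PiE_eq_empty_iff) linarith

lemma Lambda_cover:
  assumes "0 \<le> R"
  shows "Lambda R (0::'a::euclidean_space) \<subseteq> (\<Union>k\<in>Kc R. (+) (vecI k) ` unit_cube)"
proof
  fix w :: 'a assume w: "w \<in> Lambda R 0"
  define k where "k = restrict (\<lambda>b. \<lfloor>w \<bullet> b\<rfloor>) (Basis::'a set)"
  have kK: "k \<in> Kc R" unfolding Kc_def
  proof (rule PiE_I)
    fix b :: 'a assume b: "b \<in> Basis"
    have "- R \<le> w \<bullet> b" "w \<bullet> b \<le> R" using w b unfolding lam_mem by auto
    then have "- \<lceil>R\<rceil> - 1 \<le> \<lfloor>w \<bullet> b\<rfloor>" "\<lfloor>w \<bullet> b\<rfloor> \<le> \<lceil>R\<rceil>" by linarith+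
    then show "k b \<in> {- \<lceil>R\<rceil> - 1 .. \<lceil>R\<rceil>}" using b by (simp add: k_def)
  qed (simp add: k_def)
  have u: "w - vecI k \<in> unit_cube" unfolding cube_mem
  proof
    fix b :: 'a assume b: "b \<in> Basis"
    have "(w - vecI k) \<bullet> b = w \<bullet> b - of_int \<lfloor>w \<bullet> b\<rfloor>" using b by (simp add: inner_diff_left vecI_inner k_def)
    then show "0 \<le> (w - vecI k) \<bullet> b \<and> (w - vecI k) \<bullet> b \<le> 1" by linarith
  qed
  have "w = vecI k + (w - vecI k)" by simp
  then have "w \<in> (+) (vecI k) ` unit_cube" using u by blast
  then show "w \<in> (\<Union>k\<in>Kc R. (+) (vecI k) ` unit_cube)" using kK by blast
qed

lemma cnt_cover:
  fixes \<xi> :: "'a::euclidean_space set"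
  assumes lf: "locfin \<xi>" and R: "0 \<le> R"
  shows "cnt (Lambda R 0) \<xi> \<le> (\<Sum>k\<in>Kc R. cnt ((+) (vecI k) ` unit_cube) \<xi>)"
proof -
  have fin: "finite (\<xi> \<inter> (+) (vecI k) ` unit_cube)" for k :: "'a \<Rightarrow> int"
    using lf bounded_translation[OF bounded_cube] unfolding locfin_def by blast
  have "\<xi> \<inter> Lambda R 0 \<subseteq> (\<Union>k\<in>Kc R. \<xi> \<inter> (+) (vecI k) ` unit_cube)"
    using Lambda_cover[OF R] by blast
  then have "card (\<xi> \<inter> Lambda R 0) \<le> card (\<Union>k\<in>Kc R. \<xi> \<inter> (+) (vecI k) ` unit_cube)"
    by (rule card_mono[rotated]) (use fin finite_Kc in blast)
  also have "\<dots> \<le> (\<Sum>k\<in>Kc R. card (\<xi> \<inter> (+) (vecI k) ` unit_cube))"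
    by (rule card_UN_le[OF finite_Kc])
  finally show ?thesis unfolding cnt_def .
qed

context pp
begin

interpretation prob_space P by (rule prob)

lemma rho_cube: "(\<integral>\<^sup>+\<xi>. ennreal (real (cnt unit_cube \<xi>) powr g) \<partial>P) = rho P g"
  unfolding rho_def cnt_def ..

lemma rho_shift: "(\<integral>\<^sup>+\<xi>. ennreal (real (cnt ((+) v ` unit_cube) \<xi>) powr g) \<partial>P) = rho P g"
  using stat_nn_integral[OF bounded_cube borel_cube, of "\<lambda>n. ennreal (real n powr g)" v]
  by (simp add: rho_cube)

lemma moment_bound:
  assumes s: "1 \<le> s" and R: "0 \<le> R"
  shows "(\<integral>\<^sup>+\<xi>. N0 \<xi> * ennreal (real (cnt (Lambda R 0) \<xi>) powr s) \<partial>P)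
     \<le> ennreal (2 * real (card (Kc R :: ('a \<Rightarrow> int) set)) powr s) * rho P (s + 1)"
proof -
  define K :: "('a \<Rightarrow> int) set" where "K = Kc R"
  define n where "n = real (card K)"
  define a :: "('a \<Rightarrow> int) \<Rightarrow> 'a set \<Rightarrow> real" where "a k \<xi> = real (cnt ((+) (vecI k) ` unit_cube) \<xi>)" for k \<xi>
  define c :: "'a set \<Rightarrow> real" where "c \<xi> = real (cnt unit_cube \<xi>)" for \<xi>
  have finK: "finite K" unfolding K_def by (rule finite_Kc)
  have pw: "N0 \<xi> * ennreal (real (cnt (Lambda R 0) \<xi>) powr s) \<le>
      ennreal (n powr (s - 1)) * (\<Sum>k\<in>K. ennreal (c \<xi> powr (s + 1)) + ennreal (a k \<xi> powr (s + 1)))"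
    if "\<xi> \<in> space P" for \<xi>
  proof -
    have lf: "locfin \<xi>" using that by (simp add: spaceP)
    have "real (cnt (Lambda R 0) \<xi>) \<le> (\<Sum>k\<in>K. a k \<xi>)"
      using cnt_cover[OF lf R] unfolding K_def a_def by (simp flip: of_nat_sum)
    then have "real (cnt (Lambda R 0) \<xi>) powr s \<le> (\<Sum>k\<in>K. a k \<xi>) powr s"
      using s by (intro powr_mono2) auto
    also have "\<dots> \<le> n powr (s - 1) * (\<Sum>k\<in>K. a k \<xi> powr s)"
      unfolding n_def by (rule power_mean[OF finK _ s]) (simp add: a_def)
    finally have "c \<xi> * real (cnt (Lambda R 0) \<xi>) powr s \<le> c \<xi> * (n powr (s - 1) * (\<Sum>k\<in>K. a k \<xi> powr s))"
      by (intro mult_left_mono) (auto simp: c_def)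
    also have "\<dots> = n powr (s - 1) * (\<Sum>k\<in>K. c \<xi> * a k \<xi> powr s)"
      by (simp add: sum_distrib_left ac_simps)
    also have "\<dots> \<le> n powr (s - 1) * (\<Sum>k\<in>K. c \<xi> powr (s + 1) + a k \<xi> powr (s + 1))"
      using s by (intro mult_left_mono sum_mono young_simple) (auto simp: a_def c_def)
    finally have "ennreal (c \<xi> * real (cnt (Lambda R 0) \<xi>) powr s) \<le>
        ennreal (n powr (s - 1) * (\<Sum>k\<in>K. c \<xi> powr (s + 1) + a k \<xi> powr (s + 1)))"
      by (rule ennreal_leI)
    also have "\<dots> = ennreal (n powr (s - 1)) * (\<Sum>k\<in>K. ennreal (c \<xi> powr (s + 1)) + ennreal (a k \<xi> powr (s + 1)))"
      by (simp add: ennreal_mult sum_nonneg ennreal_plus[symmetric] del: ennreal_plus)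
    finally show ?thesis
      by (simp add: N0_def c_def ennreal_mult[symmetric])
  qed
  have ma: "(\<lambda>\<xi>. ennreal (a k \<xi> powr (s + 1))) \<in> borel_measurable P" for k
    unfolding a_def
    by (intro cntf_meas bounded_translation bounded_cube borel_translate borel_cube)
  have mc: "(\<lambda>\<xi>. ennreal (c \<xi> powr (s + 1))) \<in> borel_measurable P"
    unfolding c_def by (intro cntf_meas bounded_cube borel_cube)
  have "(\<integral>\<^sup>+\<xi>. N0 \<xi> * ennreal (real (cnt (Lambda R 0) \<xi>) powr s) \<partial>P) \<le>
      (\<integral>\<^sup>+\<xi>. ennreal (n powr (s - 1)) * (\<Sum>k\<in>K. ennreal (c \<xi> powr (s + 1)) + ennreal (a k \<xi> powr (s + 1))) \<partial>P)"
    by (rule nn_integral_mono) (rule pw)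
  also have "\<dots> = ennreal (n powr (s - 1)) * (\<Sum>k\<in>K. (\<integral>\<^sup>+\<xi>. ennreal (c \<xi> powr (s + 1)) \<partial>P) + (\<integral>\<^sup>+\<xi>. ennreal (a k \<xi> powr (s + 1)) \<partial>P))"
    using ma mc by (simp add: nn_integral_cmult nn_integral_sum nn_integral_add borel_measurable_sum borel_measurable_add)
  also have "\<dots> = ennreal (n powr (s - 1)) * (of_nat (card K) * (rho P (s + 1) + rho P (s + 1)))"
    unfolding a_def c_def rho_cube rho_shift by simp
  also have "\<dots> = ennreal (2 * n powr s) * rho P (s + 1)"
  proof (cases "n = 0")
    case True
    then show ?thesis by (simp add: n_def)
  next
    case False
    then have npos: "n > 0" unfolding n_def by simp
    have eq: "n powr (s - 1) * n * 2 = 2 * n powr s" using npos by (simp add: powr_diff)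
    have e1: "(of_nat (card K) :: ennreal) = ennreal n" by (simp add: n_def ennreal_of_nat_eq_real_of_nat)
    have e2: "rho P (s + 1) + rho P (s + 1) = ennreal 2 * rho P (s + 1)" by (simp add: mult_2)
    have "ennreal (n powr (s - 1)) * (of_nat (card K) * (rho P (s + 1) + rho P (s + 1))) =
        ennreal (n powr (s - 1)) * ennreal n * ennreal 2 * rho P (s + 1)"
      unfolding e1 e2 by (simp add: mult.assoc)
    also have "\<dots> = ennreal (n powr (s - 1) * n * 2) * rho P (s + 1)"
      using npos by (simp add: ennreal_mult)
    finally show ?thesis unfolding eq .
  qed
  finally show ?thesis unfolding n_def K_def .
qed

end

context pp
begin

interpretation prob_space P by (rule prob)

lemma finite_int_space: "\<xi> \<in> space P \<Longrightarrow> bounded A \<Longrightarrow> finite (\<xi> \<inter> A)"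
  by (auto simp: spaceP locfin_def)

lemma cube_sub_Lambda:
  assumes R: "1 \<le> R" shows "unit_cube \<subseteq> Lambda R (0::'a)"
proof
  fix t :: 'a assume t: "t \<in> unit_cube"
  show "t \<in> Lambda R 0" unfolding lam_mem
  proof
    fix b :: 'a assume b: "b \<in> Basis"
    then have "0 \<le> t \<bullet> b" "t \<bullet> b \<le> 1" using t unfolding cube_mem by auto
    then show "0 \<bullet> b - R \<le> t \<bullet> b \<and> t \<bullet> b \<le> 0 \<bullet> b + R" using R by simp
  qed
qed

lemma realcnt_meas: "bounded A \<Longrightarrow> A \<in> sets borel \<Longrightarrow> (\<lambda>\<xi>. real (cnt A \<xi>)) \<in> borel_measurable P"
  by (rule cntf_meas)

lemma PA_bound:
  assumes pa: "pos_assoc P" and R: "1 \<le> R" and p: "0 \<le> p" and Q: "bounded Q" "Q \<in> sets borel"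
  shows "(\<integral>\<^sup>+\<xi>. N0 \<xi> * (ennreal (of_bool (cnt Q \<xi> = 0)) * ennreal (real (cnt (Lambda R 0) \<xi>) powr p)) \<partial>P)
     \<le> (\<integral>\<^sup>+\<xi>. N0 \<xi> * ennreal (real (cnt (Lambda R 0) \<xi>) powr p) \<partial>P) * ennreal (prob {\<xi>\<in>space P. cnt Q \<xi> = 0})"
proof -
  define E where "E = {\<xi>\<in>space P. cnt Q \<xi> = 0}"
  have E: "E \<in> sets P" unfolding E_def by (rule sets_cnt[OF Q])
  define Y :: "'a set \<Rightarrow> real" where "Y \<xi> = real (cnt unit_cube \<xi>) * real (cnt (Lambda R 0) \<xi>) powr p" for \<xi>
  have Ym[measurable]: "Y \<in> borel_measurable P" unfolding Y_def
    by (intro borel_measurable_times cntf_meas bounded_cube borel_cube bounded_Lambda borel_Lambda)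
  have Yge: "0 \<le> Y \<xi>" for \<xi> unfolding Y_def by simp
  define FM :: "nat \<Rightarrow> 'a set \<Rightarrow> real" where "FM M \<xi> = min (real M) (Y \<xi>)" for M :: nat and \<xi>
  have FMm[measurable]: "FM M \<in> borel_measurable P" for M unfolding FM_def by measurable
  have FMge: "0 \<le> FM M \<xi>" for M \<xi> unfolding FM_def using Yge by simp
  have FMle: "FM M \<xi> \<le> real M" for M \<xi> unfolding FM_def by simp
  have intFM: "integrable P (FM M)" for M
    by (rule integrable_const_bound[where B="real M"]) (use FMge FMle in auto)
  have intFME: "integrable P (\<lambda>\<xi>. FM M \<xi> * indicator E \<xi>)" for M
    by (rule integrable_const_bound[where B="real M"])
      (use FMge FMle E in \<open>auto simp: indicator_def\<close>)
  have key: "(\<integral>\<xi>. FM M \<xi> * indicator E \<xi> \<partial>P) \<le> (\<integral>\<xi>. FM M \<xi> \<partial>P) * prob E" for M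
  proof -
    define As :: "'a set list" where "As = [unit_cube, Lambda R 0 - unit_cube]"
    define Bs :: "'a set list" where "Bs = [Q]"
    define f :: "nat list \<Rightarrow> real" where "f xs = min (real M) (real (xs!0) * real (xs!0 + xs!1) powr p)" for xs
    define g :: "nat list \<Rightarrow> real" where "g ys = - (of_bool (ys!0 = 0) :: real)" for ys
    have cubeR: "unit_cube \<subseteq> (Lambda R 0 :: 'a set)" by (rule cube_sub_Lambda[OF R])
    have fF: "f (map (\<lambda>A. card (\<xi> \<inter> A)) As) = FM M \<xi>" if "\<xi> \<in> space P" for \<xi>
    proof -
      have f1: "finite (\<xi> \<inter> unit_cube)" "finite (\<xi> \<inter> (Lambda R 0 - unit_cube))"
        using finite_int_space[OF that] bounded_cube bounded_Lambda bounded_diff by blast+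
      have "\<xi> \<inter> Lambda R 0 = (\<xi> \<inter> unit_cube) \<union> (\<xi> \<inter> (Lambda R 0 - unit_cube))" using cubeR by blast
      moreover have "card ((\<xi> \<inter> unit_cube) \<union> (\<xi> \<inter> (Lambda R 0 - unit_cube))) = card (\<xi> \<inter> unit_cube) + card (\<xi> \<inter> (Lambda R 0 - unit_cube))"
        by (rule card_Un_disjoint[OF f1]) blast
      ultimately have "card (\<xi> \<inter> Lambda R 0) = card (\<xi> \<inter> unit_cube) + card (\<xi> \<inter> (Lambda R 0 - unit_cube))"
        by simp
      then show ?thesis by (simp add: f_def As_def FM_def Y_def cnt_def)
    qed
    have gG: "g (map (\<lambda>B. card (\<xi> \<inter> B)) Bs) = - indicator E \<xi>" if "\<xi> \<in> space P" for \<xi>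
      using that by (simp add: g_def Bs_def E_def cnt_def indicator_def)
    have c1: "\<forall>A\<in>set As. A \<in> sets borel \<and> bounded A"
      by (simp add: As_def borel_cube bounded_cube borel_Lambda bounded_Lambda sets.Diff bounded_diff)
    have c2: "\<forall>B\<in>set Bs. B \<in> sets borel \<and> bounded B" using Q by (simp add: Bs_def)
    have c3: "disjoint_family_on (\<lambda>i. As ! i) {..<length As}"
      unfolding disjoint_family_on_def As_def by (auto simp: less_Suc_eq)
    have c4: "disjoint_family_on (\<lambda>i. Bs ! i) {..<length Bs}"
      unfolding disjoint_family_on_def Bs_def by auto
    have c5: "\<forall>xs ys. length xs = length As \<longrightarrow> list_all2 (\<le>) xs ys \<longrightarrow> f xs \<le> f ys"
    proof (intro allI impI)
      fix xs ys :: "nat list" assume l: "length xs = length As" and la: "list_all2 (\<le>) xs ys"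
      have "xs!0 \<le> ys!0" "xs!1 \<le> ys!1" using l la by (auto simp: list_all2_conv_all_nth As_def)
      then have "real (xs!0) * real (xs!0 + xs!1) powr p \<le> real (ys!0) * real (ys!0 + ys!1) powr p"
        using p by (intro mult_mono powr_mono2) auto
      then show "f xs \<le> f ys" unfolding f_def by simp
    qed
    have c6: "\<forall>xs ys. length xs = length Bs \<longrightarrow> list_all2 (\<le>) xs ys \<longrightarrow> g xs \<le> g ys"
    proof (intro allI impI)
      fix xs ys :: "nat list" assume l: "length xs = length Bs" and la: "list_all2 (\<le>) xs ys"
      have "xs!0 \<le> ys!0" using l la by (auto simp: list_all2_conv_all_nth Bs_def)
      then show "g xs \<le> g ys" unfolding g_def by auto
    qed
    have c7: "integrable P (\<lambda>\<xi>. (f (map (\<lambda>A. card (\<xi> \<inter> A)) As))\<^sup>2)"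
    proof -
      have "integrable P (\<lambda>\<xi>. (FM M \<xi>)\<^sup>2)"
        by (rule integrable_const_bound[where B="real M ^ 2"])
          (use FMge FMle in \<open>auto intro!: power_mono\<close>)
      moreover have "integrable P (\<lambda>\<xi>. (f (map (\<lambda>A. card (\<xi> \<inter> A)) As))\<^sup>2) \<longleftrightarrow> integrable P (\<lambda>\<xi>. (FM M \<xi>)\<^sup>2)"
        by (rule Bochner_Integration.integrable_cong) (simp_all add: fF)
      ultimately show ?thesis by simp
    qed
    have c8: "integrable P (\<lambda>\<xi>. (g (map (\<lambda>B. card (\<xi> \<inter> B)) Bs))\<^sup>2)"
    proof -
      have "integrable P (\<lambda>\<xi>. (- indicator E \<xi> :: real)\<^sup>2)"
        by (rule integrable_const_bound[where B=1]) (use E in \<open>auto simp: indicator_def\<close>)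
      moreover have "integrable P (\<lambda>\<xi>. (g (map (\<lambda>B. card (\<xi> \<inter> B)) Bs))\<^sup>2) \<longleftrightarrow> integrable P (\<lambda>\<xi>. (- indicator E \<xi> :: real)\<^sup>2)"
        by (rule Bochner_Integration.integrable_cong) (simp_all add: gG)
      ultimately show ?thesis by simp
    qed
    have PA: "(\<integral>\<xi>. f (map (\<lambda>A. card (\<xi> \<inter> A)) As) * g (map (\<lambda>B. card (\<xi> \<inter> B)) Bs) \<partial>P)
       - (\<integral>\<xi>. f (map (\<lambda>A. card (\<xi> \<inter> A)) As) \<partial>P) * (\<integral>\<xi>. g (map (\<lambda>B. card (\<xi> \<inter> B)) Bs) \<partial>P) \<ge> 0"
      using pa unfolding pos_assoc_def using c1 c2 c3 c4 c5 c6 c7 c8 by blast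
    have i1: "(\<integral>\<xi>. f (map (\<lambda>A. card (\<xi> \<inter> A)) As) * g (map (\<lambda>B. card (\<xi> \<inter> B)) Bs) \<partial>P)
        = - (\<integral>\<xi>. FM M \<xi> * indicator E \<xi> \<partial>P)"
    proof -
      have "(\<integral>\<xi>. f (map (\<lambda>A. card (\<xi> \<inter> A)) As) * g (map (\<lambda>B. card (\<xi> \<inter> B)) Bs) \<partial>P)
          = (\<integral>\<xi>. - (FM M \<xi> * indicator E \<xi>) \<partial>P)"
        by (rule Bochner_Integration.integral_cong) (simp_all add: fF gG)
      then show ?thesis by simp
    qed
    have i2: "(\<integral>\<xi>. f (map (\<lambda>A. card (\<xi> \<inter> A)) As) \<partial>P) = (\<integral>\<xi>. FM M \<xi> \<partial>P)"
      by (rule Bochner_Integration.integral_cong) (simp_all add: fF)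
    have i3: "(\<integral>\<xi>. g (map (\<lambda>B. card (\<xi> \<inter> B)) Bs) \<partial>P) = - prob E"
    proof -
      have "(\<integral>\<xi>. g (map (\<lambda>B. card (\<xi> \<inter> B)) Bs) \<partial>P) = (\<integral>\<xi>. - indicator E \<xi> \<partial>P)"
        by (rule Bochner_Integration.integral_cong) (simp_all add: gG)
      then show ?thesis using E by (simp add: Int_absorb2 sets.sets_into_space)
    qed
    show ?thesis using PA unfolding i1 i2 i3 by simp
  qed
  have pw: "N0 \<xi> * (ennreal (of_bool (cnt Q \<xi> = 0)) * ennreal (real (cnt (Lambda R 0) \<xi>) powr p))
      = (SUP M. ennreal (FM M \<xi> * indicator E \<xi>))" if "\<xi> \<in> space P" for \<xi>
  proof -
    have "N0 \<xi> * (ennreal (of_bool (cnt Q \<xi> = 0)) * ennreal (real (cnt (Lambda R 0) \<xi>) powr p))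
        = ennreal (Y \<xi> * indicator E \<xi>)"
      using that by (simp add: N0_def Y_def E_def indicator_def ennreal_mult[symmetric])
    also have "\<dots> = (SUP M. ennreal (FM M \<xi> * indicator E \<xi>))"
    proof (rule antisym)
      obtain M :: nat where "Y \<xi> \<le> real M" using real_arch_simple by blast
      then have "FM M \<xi> = Y \<xi>" unfolding FM_def by simp
      then show "ennreal (Y \<xi> * indicator E \<xi>) \<le> (SUP M. ennreal (FM M \<xi> * indicator E \<xi>))"
        by (intro SUP_upper2[of M]) auto
      show "(SUP M. ennreal (FM M \<xi> * indicator E \<xi>)) \<le> ennreal (Y \<xi> * indicator E \<xi>)"
        by (intro SUP_least ennreal_leI mult_right_mono) (auto simp: FM_def)
    qed
    finally show ?thesis .
  qed
  have inc: "incseq (\<lambda>M \<xi>. ennreal (FM M \<xi> * indicator E \<xi>))"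
    by (intro incseq_SucI le_funI ennreal_leI mult_right_mono) (auto simp: FM_def)
  have "(\<integral>\<^sup>+\<xi>. N0 \<xi> * (ennreal (of_bool (cnt Q \<xi> = 0)) * ennreal (real (cnt (Lambda R 0) \<xi>) powr p)) \<partial>P)
      = (\<integral>\<^sup>+\<xi>. (SUP M. ennreal (FM M \<xi> * indicator E \<xi>)) \<partial>P)"
    by (rule nn_integral_cong) (rule pw)
  also have "\<dots> = (SUP M. \<integral>\<^sup>+\<xi>. ennreal (FM M \<xi> * indicator E \<xi>) \<partial>P)"
    by (rule nn_integral_monotone_convergence_SUP[OF inc]) (use E in measurable)
  also have "\<dots> \<le> (\<integral>\<^sup>+\<xi>. N0 \<xi> * ennreal (real (cnt (Lambda R 0) \<xi>) powr p) \<partial>P) * ennreal (prob E)"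
  proof (rule SUP_least)
    fix M
    have "(\<integral>\<^sup>+\<xi>. ennreal (FM M \<xi> * indicator E \<xi>) \<partial>P) = ennreal (\<integral>\<xi>. FM M \<xi> * indicator E \<xi> \<partial>P)"
      by (rule nn_integral_eq_integral[OF intFME]) (simp add: FMge)
    also have "\<dots> \<le> ennreal ((\<integral>\<xi>. FM M \<xi> \<partial>P) * prob E)" by (rule ennreal_leI[OF key])
    also have "\<dots> = ennreal (\<integral>\<xi>. FM M \<xi> \<partial>P) * ennreal (prob E)"
      by (rule ennreal_mult) (auto intro!: integral_nonneg_AE simp: FMge)
    also have "ennreal (\<integral>\<xi>. FM M \<xi> \<partial>P) = (\<integral>\<^sup>+\<xi>. ennreal (FM M \<xi>) \<partial>P)"
      by (rule nn_integral_eq_integral[OF intFM, symmetric]) (simp add: FMge)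
    also have "\<dots> \<le> (\<integral>\<^sup>+\<xi>. N0 \<xi> * ennreal (real (cnt (Lambda R 0) \<xi>) powr p) \<partial>P)"
      by (rule nn_integral_mono) (simp add: FM_def Y_def N0_def ennreal_mult[symmetric] ennreal_leI)
    finally show "(\<integral>\<^sup>+\<xi>. ennreal (FM M \<xi> * indicator E \<xi>) \<partial>P)
        \<le> (\<integral>\<^sup>+\<xi>. N0 \<xi> * ennreal (real (cnt (Lambda R 0) \<xi>) powr p) \<partial>P) * ennreal (prob E)"
      by (simp add: mult_right_mono)
  qed
  finally show ?thesis unfolding E_def .
qed

end

lemma geo_powr:
  fixes S e :: real
  assumes "0 < S"
  shows "(S * 2 ^ j) powr e = S powr e * (2 powr e) ^ j"
proof -
  have a: "(2::real) ^ j = 2 powr real j" by (simp add: powr_realpow)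
  have "(S * 2 ^ j) powr e = S powr e * (2 ^ j) powr e" by (rule powr_mult)
  also have "((2::real) ^ j) powr e = (2 powr e) ^ j" unfolding a by (simp add: powr_powr powr_power mult.commute)
  finally show ?thesis .
qed

lemma summable_geo_powr:
  fixes S e C :: real
  assumes "0 < S" "0 < e"
  shows "summable (\<lambda>j::nat. C * (S * 2 ^ j) powr (- e))"
proof -
  have "(2::real) powr (- e) < 1" using assms by (simp add: powr_less_one)
  moreover have "0 \<le> (2::real) powr (- e)" by simp
  ultimately have "summable (\<lambda>j::nat. ((2::real) powr (- e)) ^ j)" by (intro summable_geometric) simp
  then have "summable (\<lambda>j::nat. (C * S powr (- e)) * ((2::real) powr (- e)) ^ j)" by (rule summable_mult)
  then show ?thesis by (simp add: geo_powr[OF assms(1)] mult.assoc)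
qed

context pp
begin

interpretation prob_space P by (rule prob)

lemma final_finite:
  fixes S p C e :: real
  assumes S: "2 * real DIM('a) < S" and p: "0 \<le> p" and m: "intensity P > 0"
    and A0: "(\<integral>\<^sup>+\<xi>. N0 \<xi> * ennreal (real (cnt (Lambda (2 * S + 1) 0) \<xi>) powr p) \<partial>P) < \<infinity>"
    and e: "0 < e" and C: "0 \<le> C"
    and bnd: "\<And>j k. k \<in> Kset \<Longrightarrow> (\<integral>\<^sup>+\<xi>. Tjk S p j k \<xi> \<partial>P) \<le> ennreal (C * (S * 2 ^ j) powr (- e))"
  shows "palm_exp P (\<lambda>\<xi>. deg0_pow \<xi> p) < \<infinity>"
proof -
  have "0 \<le> 2 * real DIM('a)" by simp
  then have Spos: "0 < S" using S by linarith
  define b where "b j = real (card (Kset :: ('a \<Rightarrow> int) set)) * (C * (S * 2 ^ j) powr (- e))" for j :: nat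
  have b0: "0 \<le> b j" for j unfolding b_def using C by simp
  have sb: "summable b" unfolding b_def
    using summable_mult[OF summable_geo_powr[OF Spos e, of C], of "real (card (Kset :: ('a \<Rightarrow> int) set))"]
    by simp
  have "(\<Sum>k\<in>(Kset :: ('a \<Rightarrow> int) set). \<integral>\<^sup>+\<xi>. Tjk S p j k \<xi> \<partial>P) \<le> ennreal (b j)" for j
  proof -
    have "(\<Sum>k\<in>(Kset :: ('a \<Rightarrow> int) set). \<integral>\<^sup>+\<xi>. Tjk S p j k \<xi> \<partial>P) \<le> (\<Sum>k\<in>(Kset :: ('a \<Rightarrow> int) set). ennreal (C * (S * 2 ^ j) powr (- e)))"
      by (intro sum_mono bnd)
    also have "\<dots> = ennreal (b j)" unfolding b_def using C
      by (simp add: ennreal_mult ennreal_of_nat_eq_real_of_nat)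
    finally show ?thesis .
  qed
  then have "(\<Sum>j. \<Sum>k\<in>(Kset :: ('a \<Rightarrow> int) set). \<integral>\<^sup>+\<xi>. Tjk S p j k \<xi> \<partial>P) \<le> (\<Sum>j. ennreal (b j))"
    by (intro suminf_le) auto
  also have "\<dots> = ennreal (\<Sum>j. b j)" by (rule suminf_ennreal2[OF b0 sb])
  finally have "(\<Sum>j. \<Sum>k\<in>(Kset :: ('a \<Rightarrow> int) set). \<integral>\<^sup>+\<xi>. Tjk S p j k \<xi> \<partial>P) < \<infinity>"
    using le_less_trans by fastforce
  then have "(\<integral>\<^sup>+\<xi>. N0 \<xi> * ennreal (real (cnt (Lambda (2 * S + 1) 0) \<xi>) powr p) \<partial>P) +
      (\<Sum>j. \<Sum>k\<in>(Kset :: ('a \<Rightarrow> int) set). \<integral>\<^sup>+\<xi>. Tjk S p j k \<xi> \<partial>P) < \<infinity>"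
    using A0 by simp
  then have "ennreal (1 / intensity P) * ((\<integral>\<^sup>+\<xi>. N0 \<xi> * ennreal (real (cnt (Lambda (2 * S + 1) 0) \<xi>) powr p) \<partial>P) +
      (\<Sum>j. \<Sum>k\<in>(Kset :: ('a \<Rightarrow> int) set). \<integral>\<^sup>+\<xi>. Tjk S p j k \<xi> \<partial>P)) < \<infinity>"
    by (simp add: ennreal_mult_less_top)
  then show ?thesis using palm_reduce[OF S p] by (rule le_less_trans[rotated])
qed

lemma Lambda_shift: "(+) g ` Lambda h (0::'a) = Lambda h g"
  unfolding Lambda_def using cbox_translation[of g "- h *\<^sub>R One" "h *\<^sub>R One"]
  by (simp add: algebra_simps)

lemma void_shift:
  "prob {\<xi>\<in>space P. cnt (Lambda h g) \<xi> = 0} = prob {\<xi>\<in>space P. \<xi> \<inter> Lambda h (0::'a) = {}}"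
proof -
  have "prob {\<xi>\<in>space P. cnt (Lambda h g) \<xi> = 0} = prob {\<xi>\<in>space P. cnt (Lambda h 0) \<xi> = 0}"
    using stat_measure[OF bounded_Lambda borel_Lambda, of g h 0 0] by (simp add: Lambda_shift)
  also have "{\<xi>\<in>space P. cnt (Lambda h 0) \<xi> = 0} = {\<xi>\<in>space P. \<xi> \<inter> Lambda h (0::'a) = {}}"
    using finite_int_space[OF _ bounded_Lambda] by (auto simp: cnt_def)
  finally show ?thesis .
qed

lemma rho_mono:
  assumes "1 \<le> a" "a \<le> b"
  shows "rho P a \<le> rho P b"
  unfolding rho_def
proof (rule nn_integral_mono)
  fix \<xi> :: "'a set"
  show "ennreal (real (card (\<xi> \<inter> unit_cube)) powr a) \<le> ennreal (real (card (\<xi> \<inter> unit_cube)) powr b)"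
  proof (cases "card (\<xi> \<inter> unit_cube) = 0")
    case True then show ?thesis by simp
  next
    case False
    then have "1 \<le> real (card (\<xi> \<inter> unit_cube))" by simp
    then show ?thesis using assms by (intro ennreal_leI powr_mono) auto
  qed
qed

lemma card_Kc_powr:
  assumes r: "1 \<le> r" and p: "0 \<le> p"
  shows "real (card (Kc (4 * r + 1) :: ('a \<Rightarrow> int) set)) powr p \<le> 14 powr (real DIM('a) * p) * r powr (real DIM('a) * p)"
proof -
  have "real (card (Kc (4 * r + 1) :: ('a \<Rightarrow> int) set)) \<le> (2 * (4 * r + 1) + 4) ^ DIM('a)"
    by (rule card_Kc_bound) (use r in simp)
  also have "\<dots> \<le> (14 * r) ^ DIM('a)" using r by (intro power_mono) auto
  finally have "real (card (Kc (4 * r + 1) :: ('a \<Rightarrow> int) set)) powr p \<le> ((14 * r) ^ DIM('a)) powr p"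
    using p by (intro powr_mono2) auto
  also have "((14 * r) ^ DIM('a)) powr p = (14 * r) powr (real DIM('a) * p)"
  proof -
    have "(14 * r) ^ DIM('a) = (14 * r) powr real DIM('a)" using r by (simp add: powr_realpow)
    then show ?thesis by (simp only: powr_powr)
  qed
  also have "\<dots> = 14 powr (real DIM('a) * p) * r powr (real DIM('a) * p)" by (rule powr_mult)
  finally show ?thesis .
qed

lemma powr_h:
  fixes r c a :: real
  assumes "0 < r" "0 < c"
  shows "(r / c) powr (- a) = c powr a * r powr (- a)"
proof -
  have "(r / c) powr (- a) = r powr (- a) / c powr (- a)" by (rule powr_divide)
  also have "c powr (- a) = inverse (c powr a)" by (rule powr_minus)
  finally show ?thesis by (simp add: divide_inverse mult.commute)
qed

lemma case3:
  assumes p: "1 \<le> p" and m: "intensity P > 0" and rh: "rho P (1 + p) < \<infinity>"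
    and pa: "pos_assoc P" and al: "real DIM('a) * p < \<alpha>" and cc: "condC P \<alpha>"
  shows "palm_exp P (\<lambda>\<xi>. deg0_pow \<xi> p) < \<infinity>"
proof -
  define d where "d = real DIM('a)"
  have d1: "1 \<le> d" unfolding d_def using DIM_positive[where 'a='a] by linarith
  define S where "S = 3 * d + 1"
  have S: "2 * real DIM('a) < S" unfolding S_def d_def by simp
  have Spos: "0 < S" using d1 unfolding S_def by simp
  have rh': "rho P (p + 1) < \<infinity>" using rh by (simp add: add.commute)
  define \<rho> where "\<rho> = enn2real (rho P (p + 1))"
  have \<rho>: "rho P (p + 1) = ennreal \<rho>" "0 \<le> \<rho>" unfolding \<rho>_def using rh' by (auto simp: ennreal_enn2real_if)
  obtain \<kappa> where \<kappa>: "\<kappa> > 0" "\<And>l. 1 \<le> l \<Longrightarrow> prob {\<xi>\<in>space P. \<xi> \<inter> Lambda l 0 = {}} \<le> \<kappa> * l powr (- \<alpha>)"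
    using cc unfolding condC_def by blast
  have A0: "(\<integral>\<^sup>+\<xi>. N0 \<xi> * ennreal (real (cnt (Lambda (2 * S + 1) 0) \<xi>) powr p) \<partial>P) < \<infinity>"
    using moment_bound[OF p, of "2 * S + 1"] Spos rh' by (auto simp: ennreal_mult_less_top le_less_trans)
  define e where "e = \<alpha> - d * p"
  have e: "0 < e" unfolding e_def d_def using al by simp
  define C where "C = 2 * 14 powr (d * p) * \<rho> * \<kappa> * (3 * d) powr \<alpha>"
  have C: "0 \<le> C" unfolding C_def using \<rho> \<kappa> by simp
  show ?thesis
  proof (rule final_finite[OF S _ m A0 e C])
    show "0 \<le> p" using p by simp
    fix j :: nat and k :: "'a \<Rightarrow> int" assume k: "k \<in> Kset"
    define r where "r = S * 2 ^ j"
    have r1: "3 * d \<le> r"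
    proof -
      have "(1::real) \<le> 2 ^ j" by simp
      then have "S \<le> r" unfolding r_def using Spos by simp
      then show ?thesis unfolding S_def by simp
    qed
    then have rge1: "1 \<le> r" using d1 by simp
    define h where "h = r / real (3 * DIM('a))"
    have h3: "h = r / (3 * d)" unfolding h_def d_def by simp
    have h1: "1 \<le> h" unfolding h3 using r1 d1 by simp
    define Q where "Q = Lambda h (grid h k)"
    have "(\<integral>\<^sup>+\<xi>. Tjk S p j k \<xi> \<partial>P) =
        (\<integral>\<^sup>+\<xi>. N0 \<xi> * (ennreal (of_bool (cnt Q \<xi> = 0)) * ennreal (real (cnt (Lambda (4 * r + 1) 0) \<xi>) powr p)) \<partial>P)"
      unfolding Tjk_def Q_def h_def r_def by (simp add: mult.assoc)
    also have "\<dots> \<le> (\<integral>\<^sup>+\<xi>. N0 \<xi> * ennreal (real (cnt (Lambda (4 * r + 1) 0) \<xi>) powr p) \<partial>P) *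
        ennreal (prob {\<xi>\<in>space P. cnt Q \<xi> = 0})"
      by (rule PA_bound[OF pa _ _ ]) (use rge1 p in \<open>auto simp: Q_def bounded_Lambda borel_Lambda\<close>)
    also have "\<dots> \<le> (ennreal (2 * real (card (Kc (4 * r + 1) :: ('a \<Rightarrow> int) set)) powr p) * ennreal \<rho>) *
        ennreal (\<kappa> * h powr (- \<alpha>))"
    proof (rule mult_mono)
      show "(\<integral>\<^sup>+\<xi>. N0 \<xi> * ennreal (real (cnt (Lambda (4 * r + 1) 0) \<xi>) powr p) \<partial>P)
          \<le> ennreal (2 * real (card (Kc (4 * r + 1) :: ('a \<Rightarrow> int) set)) powr p) * ennreal \<rho>"
        using moment_bound[OF p, of "4 * r + 1"] rge1 \<rho> by simp
      have "prob {\<xi>\<in>space P. cnt Q \<xi> = 0} = prob {\<xi>\<in>space P. \<xi> \<inter> Lambda h 0 = {}}"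
        unfolding Q_def by (rule void_shift)
      also have "\<dots> \<le> \<kappa> * h powr (- \<alpha>)" by (rule \<kappa>(2)[OF h1])
      finally show "ennreal (prob {\<xi>\<in>space P. cnt Q \<xi> = 0}) \<le> ennreal (\<kappa> * h powr (- \<alpha>))"
        by (rule ennreal_leI)
    qed auto
    also have "\<dots> = ennreal (2 * real (card (Kc (4 * r + 1) :: ('a \<Rightarrow> int) set)) powr p * \<rho> * (\<kappa> * h powr (- \<alpha>)))"
      using \<rho> \<kappa> by (simp add: ennreal_mult)
    also have "\<dots> \<le> ennreal (C * r powr (- e))"
    proof (rule ennreal_leI)
      have "real (card (Kc (4 * r + 1) :: ('a \<Rightarrow> int) set)) powr p \<le> 14 powr (d * p) * r powr (d * p)"
        using card_Kc_powr[OF rge1, of p] p unfolding d_def by simp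
      then have "2 * real (card (Kc (4 * r + 1) :: ('a \<Rightarrow> int) set)) powr p * \<rho> * (\<kappa> * h powr (- \<alpha>))
          \<le> 2 * (14 powr (d * p) * r powr (d * p)) * \<rho> * (\<kappa> * h powr (- \<alpha>))"
        using \<rho> \<kappa> by (intro mult_right_mono mult_left_mono) auto
      also have "\<dots> = C * (r powr (d * p) * r powr (- \<alpha>))"
        unfolding C_def h3 using rge1 d1 by (simp add: powr_h)
      also have "r powr (d * p) * r powr (- \<alpha>) = r powr (- e)"
        unfolding e_def by (simp add: powr_add[symmetric])
      finally show "2 * real (card (Kc (4 * r + 1) :: ('a \<Rightarrow> int) set)) powr p * \<rho> * (\<kappa> * h powr (- \<alpha>))
          \<le> C * r powr (- e)" .
    qed
    finally show "(\<integral>\<^sup>+\<xi>. Tjk S p j k \<xi> \<partial>P) \<le> ennreal (C * (S * 2 ^ j) powr (- e))"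
      unfolding r_def .
  qed
qed

end

lemma split_ineq:
  fixes X t p \<beta> :: real and ind :: bool
  assumes X: "0 \<le> X" and t: "0 < t" and p: "0 \<le> p" and \<beta>: "0 < \<beta>"
  shows "of_bool ind * X powr p \<le> t powr p * of_bool ind + t powr (- \<beta>) * X powr (p + \<beta>)"
proof (cases "X \<le> t")
  case True
  then have "X powr p \<le> t powr p" using X p by (intro powr_mono2) auto
  then have "of_bool ind * X powr p \<le> t powr p * of_bool ind" by (cases ind) auto
  moreover have "0 \<le> t powr (- \<beta>) * X powr (p + \<beta>)" by simp
  ultimately show ?thesis by linarith
next
  case False
  then have Xt: "t < X" by simp
  then have Xpos: "0 < X" using t by simp
  have "X powr (- \<beta>) \<le> t powr (- \<beta>)"
    using Xt t \<beta> by (intro powr_mono2') auto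
  then have "X powr (p + \<beta>) * X powr (- \<beta>) \<le> X powr (p + \<beta>) * t powr (- \<beta>)"
    by (intro mult_left_mono) auto
  moreover have "X powr (p + \<beta>) * X powr (- \<beta>) = X powr p" by (simp add: powr_add[symmetric])
  ultimately have "X powr p \<le> t powr (- \<beta>) * X powr (p + \<beta>)" by (simp add: mult.commute)
  then have "of_bool ind * X powr p \<le> t powr (- \<beta>) * X powr (p + \<beta>)" by (cases ind) auto
  moreover have "0 \<le> t powr p * of_bool ind" by simp
  ultimately show ?thesis by linarith
qed

context pp
begin

interpretation prob_space P by (rule prob)

lemma palm_void:
  fixes h :: real and g :: 'a
  assumes m: "intensity P > 0"
  shows "(\<integral>\<^sup>+\<xi>. N0 \<xi> * ennreal (of_bool (cnt (Lambda h g) \<xi> = 0)) \<partial>P) \<le>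
    ennreal (intensity P) * palm_prob P {\<xi>. \<xi> \<inter> Lambda (h - 1/2) (g - (1/2) *\<^sub>R One) = {}}"
proof -
  define A where "A = {\<xi>::'a set. \<xi> \<inter> Lambda (h - 1/2) (g - (1/2) *\<^sub>R One) = {}}"
  have "ennreal (intensity P) * palm_prob P A = (\<integral>\<^sup>+\<xi>. (\<Sum>x\<in>\<xi> \<inter> unit_cube. indicator A (translate x \<xi>)) \<partial>P)"
    unfolding palm_prob_def palm_exp_def using m
    by (simp add: ennreal_mult[symmetric] mult.assoc[symmetric])
  moreover have "(\<integral>\<^sup>+\<xi>. N0 \<xi> * ennreal (of_bool (cnt (Lambda h g) \<xi> = 0)) \<partial>P) \<le>
      (\<integral>\<^sup>+\<xi>. (\<Sum>x\<in>\<xi> \<inter> unit_cube. indicator A (translate x \<xi>)) \<partial>P)"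
  proof (rule nn_integral_mono)
    fix \<xi> assume sp: "\<xi> \<in> space P"
    show "N0 \<xi> * ennreal (of_bool (cnt (Lambda h g) \<xi> = 0)) \<le> (\<Sum>x\<in>\<xi> \<inter> unit_cube. indicator A (translate x \<xi>))"
    proof (cases "cnt (Lambda h g) \<xi> = 0")
      case False then show ?thesis by simp
    next
      case True
      then have emp: "\<xi> \<inter> Lambda h g = {}"
        using finite_int_space[OF sp bounded_Lambda] by (simp add: cnt_def)
      have "indicator A (translate x \<xi>) = (1::ennreal)" if x: "x \<in> \<xi> \<inter> unit_cube" for x
      proof -
        have "translate x \<xi> \<inter> Lambda (h - 1/2) (g - (1/2) *\<^sub>R One) = {}"
        proof (rule ccontr)
          assume "translate x \<xi> \<inter> Lambda (h - 1/2) (g - (1/2) *\<^sub>R One) \<noteq> {}"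
          then obtain y where y: "y \<in> translate x \<xi>" "y \<in> Lambda (h - 1/2) (g - (1/2) *\<^sub>R One)" by blast
          have "y + x \<in> \<xi>" using y(1) by (simp add: translate_mem)
          moreover have "y + x \<in> Lambda h g" unfolding lam_mem
          proof
            fix b :: 'a assume b: "b \<in> Basis"
            have "0 \<le> x \<bullet> b" "x \<bullet> b \<le> 1" using x b by (auto simp: cube_mem)
            moreover have "(g - (1/2) *\<^sub>R One) \<bullet> b - (h - 1/2) \<le> y \<bullet> b" "y \<bullet> b \<le> (g - (1/2) *\<^sub>R One) \<bullet> b + (h - 1/2)"
              using y(2) b unfolding lam_mem by auto
            ultimately show "g \<bullet> b - h \<le> (y + x) \<bullet> b \<and> (y + x) \<bullet> b \<le> g \<bullet> b + h"
              using b by (simp add: inner_diff_left inner_add_left)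
          qed
          ultimately show False using emp by blast
        qed
        then show ?thesis by (simp add: A_def)
      qed
      then have "(\<Sum>x\<in>\<xi> \<inter> unit_cube. indicator A (translate x \<xi>)) = (\<Sum>x\<in>\<xi> \<inter> unit_cube. (1::ennreal))"
        by (intro sum.cong) auto
      also have "\<dots> = N0 \<xi>" by (simp add: N0_def cnt_def ennreal_of_nat_eq_real_of_nat)
      finally show ?thesis using True by simp
    qed
  qed
  ultimately show ?thesis unfolding A_def by simp
qed

lemma case1:
  assumes p: "1 \<le> p" and m: "intensity P > 0" and a0: "0 < \<alpha>'" and C0: "0 < C0"
    and \<gamma>: "p + 1 < \<gamma>" and rg: "rho P \<gamma> < \<infinity>"
    and al: "real DIM('a) * p * (\<gamma> - 1) / (\<gamma> - 1 - p) < \<alpha>'"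
    and pv: "\<forall>x l. l > 0 \<longrightarrow> palm_prob P {\<xi>. \<xi> \<inter> Lambda l x = {}} \<le> ennreal (C0 * l powr (- \<alpha>'))"
  shows "palm_exp P (\<lambda>\<xi>. deg0_pow \<xi> p) < \<infinity>"
proof -
  define d where "d = real DIM('a)"
  have d1: "1 \<le> d" unfolding d_def using DIM_positive[where 'a='a] by linarith
  define S where "S = 3 * d + 1"
  have S: "2 * real DIM('a) < S" unfolding S_def d_def by simp
  have Spos: "0 < S" using d1 unfolding S_def by simp
  have rh': "rho P (p + 1) < \<infinity>" using rho_mono[of "p + 1" \<gamma>] p \<gamma> rg by (simp add: le_less_trans)
  have A0: "(\<integral>\<^sup>+\<xi>. N0 \<xi> * ennreal (real (cnt (Lambda (2 * S + 1) 0) \<xi>) powr p) \<partial>P) < \<infinity>"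
    using moment_bound[OF p, of "2 * S + 1"] Spos rh' by (auto simp: ennreal_mult_less_top le_less_trans)
  define \<rho> where "\<rho> = enn2real (rho P \<gamma>)"
  have \<rho>: "rho P \<gamma> = ennreal \<rho>" "0 \<le> \<rho>" unfolding \<rho>_def using rg by (auto simp: ennreal_enn2real_if)
  define \<beta> where "\<beta> = \<gamma> - 1 - p"
  have \<beta>: "0 < \<beta>" unfolding \<beta>_def using \<gamma> by simp
  define D where "D = d * (\<gamma> - 1) / \<beta>"
  have pD: "p * D < \<alpha>'" using al unfolding D_def d_def \<beta>_def by (simp add: mult_ac)
  have Dbeta: "D * \<beta> = d * (\<gamma> - 1)" unfolding D_def using \<beta> by simp
  define b where "b = (D + \<alpha>' / p) / 2"
  define e1 where "e1 = \<alpha>' - b * p"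
  define e2 where "e2 = b * \<beta> - d * (\<gamma> - 1)"
  have e1: "0 < e1" unfolding e1_def b_def using pD p by (simp add: field_simps)
  have "D < \<alpha>' / p" using pD p by (simp add: field_simps)
  then have "0 < (b - D) * \<beta>" unfolding b_def using \<beta> by simp
  then have e2: "0 < e2" unfolding e2_def using Dbeta by (simp add: algebra_simps)
  define e where "e = min e1 e2"
  have e: "0 < e" unfolding e_def using e1 e2 by simp
  define C where "C = intensity P * C0 * (6 * d) powr \<alpha>' + 2 * 14 powr (d * (\<gamma> - 1)) * \<rho>"
  have C: "0 \<le> C" unfolding C_def using m C0 \<rho> by simp
  show ?thesis
  proof (rule final_finite[OF S _ m A0 e C])
    show "0 \<le> p" using p by simp
    fix j :: nat and k :: "'a \<Rightarrow> int" assume k: "k \<in> Kset"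
    define r where "r = S * 2 ^ j"
    have r1: "3 * d \<le> r"
    proof -
      have "(1::real) \<le> 2 ^ j" by simp
      then have "S \<le> r" unfolding r_def using Spos by simp
      then show ?thesis unfolding S_def by simp
    qed
    then have rge1: "1 \<le> r" using d1 by simp
    define h where "h = r / real (3 * DIM('a))"
    have h3: "h = r / (3 * d)" unfolding h_def d_def by simp
    have h1: "1 \<le> h" unfolding h3 using r1 d1 by simp
    define Q where "Q = Lambda h (grid h k)"
    define R where "R = 4 * r + 1"
    define t where "t = r powr b"
    have tpos: "0 < t" unfolding t_def using rge1 by simp
    have pbg: "p + \<beta> = \<gamma> - 1" unfolding \<beta>_def by simp
    have pw: "Tjk S p j k \<xi> \<le> ennreal (t powr p) * (N0 \<xi> * ennreal (of_bool (cnt Q \<xi> = 0))) +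
        ennreal (t powr (- \<beta>)) * (N0 \<xi> * ennreal (real (cnt (Lambda R 0) \<xi>) powr (p + \<beta>)))" for \<xi>
    proof -
      define c where "c = real (cnt unit_cube \<xi>)"
      define X where "X = real (cnt (Lambda R 0) \<xi>)"
      have "Tjk S p j k \<xi> = ennreal (c * (of_bool (cnt Q \<xi> = 0) * X powr p))"
        unfolding Tjk_def N0_def c_def X_def Q_def R_def h_def r_def by (simp add: ennreal_mult[symmetric] mult.assoc)
      also have "\<dots> \<le> ennreal (c * (t powr p * of_bool (cnt Q \<xi> = 0) + t powr (- \<beta>) * X powr (p + \<beta>)))"
        using split_ineq[of X t p \<beta> "cnt Q \<xi> = 0"] tpos p \<beta>
        by (intro ennreal_leI mult_left_mono) (auto simp: c_def X_def)
      also have "\<dots> = ennreal (t powr p) * (N0 \<xi> * ennreal (of_bool (cnt Q \<xi> = 0))) +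
          ennreal (t powr (- \<beta>)) * (N0 \<xi> * ennreal (X powr (p + \<beta>)))"
        by (simp add: N0_def c_def distrib_left ennreal_plus[symmetric] ennreal_mult[symmetric] mult_ac del: ennreal_plus)
      finally show ?thesis unfolding X_def .
    qed
    have m1: "(\<lambda>\<xi>. N0 \<xi> * ennreal (of_bool (cnt Q \<xi> = 0))) \<in> borel_measurable P"
      unfolding Q_def by (intro borel_measurable_times_ennreal N0_meas cntf_meas bounded_Lambda borel_Lambda)
    have m2: "(\<lambda>\<xi>. N0 \<xi> * ennreal (real (cnt (Lambda R 0) \<xi>) powr (p + \<beta>))) \<in> borel_measurable P"
      by (intro borel_measurable_times_ennreal N0_meas cntf_meas bounded_Lambda borel_Lambda)
    have "(\<integral>\<^sup>+\<xi>. Tjk S p j k \<xi> \<partial>P) \<le> (\<integral>\<^sup>+\<xi>. ennreal (t powr p) * (N0 \<xi> * ennreal (of_bool (cnt Q \<xi> = 0))) +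
        ennreal (t powr (- \<beta>)) * (N0 \<xi> * ennreal (real (cnt (Lambda R 0) \<xi>) powr (p + \<beta>))) \<partial>P)"
      by (rule nn_integral_mono) (rule pw)
    also have "\<dots> = ennreal (t powr p) * (\<integral>\<^sup>+\<xi>. N0 \<xi> * ennreal (of_bool (cnt Q \<xi> = 0)) \<partial>P) +
        ennreal (t powr (- \<beta>)) * (\<integral>\<^sup>+\<xi>. N0 \<xi> * ennreal (real (cnt (Lambda R 0) \<xi>) powr (p + \<beta>)) \<partial>P)"
      using m1 m2 by (simp add: nn_integral_add nn_integral_cmult)
    also have "\<dots> \<le> ennreal (t powr p) * (ennreal (intensity P) * ennreal (C0 * (h - 1/2) powr (- \<alpha>'))) +
        ennreal (t powr (- \<beta>)) * (ennreal (2 * real (card (Kc R :: ('a \<Rightarrow> int) set)) powr (p + \<beta>)) * ennreal \<rho>)"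
    proof (intro add_mono mult_left_mono)
      have "(\<integral>\<^sup>+\<xi>. N0 \<xi> * ennreal (of_bool (cnt Q \<xi> = 0)) \<partial>P) \<le>
          ennreal (intensity P) * palm_prob P {\<xi>. \<xi> \<inter> Lambda (h - 1/2) (grid h k - (1/2) *\<^sub>R One) = {}}"
        unfolding Q_def by (rule palm_void[OF m])
      also have "\<dots> \<le> ennreal (intensity P) * ennreal (C0 * (h - 1/2) powr (- \<alpha>'))"
        using pv h1 by (intro mult_left_mono) auto
      finally show "(\<integral>\<^sup>+\<xi>. N0 \<xi> * ennreal (of_bool (cnt Q \<xi> = 0)) \<partial>P) \<le>
          ennreal (intensity P) * ennreal (C0 * (h - 1/2) powr (- \<alpha>'))" .
      show "(\<integral>\<^sup>+\<xi>. N0 \<xi> * ennreal (real (cnt (Lambda R 0) \<xi>) powr (p + \<beta>)) \<partial>P) \<le>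
          ennreal (2 * real (card (Kc R :: ('a \<Rightarrow> int) set)) powr (p + \<beta>)) * ennreal \<rho>"
        using moment_bound[of "p + \<beta>" R] p \<beta> rge1 \<rho> pbg unfolding R_def by simp
    qed auto
    also have "\<dots> = ennreal (t powr p * (intensity P * (C0 * (h - 1/2) powr (- \<alpha>'))) +
        t powr (- \<beta>) * (2 * real (card (Kc R :: ('a \<Rightarrow> int) set)) powr (p + \<beta>) * \<rho>))"
      using m C0 \<rho> by (simp add: ennreal_mult[symmetric] ennreal_plus[symmetric] del: ennreal_plus)
    also have "\<dots> \<le> ennreal (C * r powr (- e))"
    proof (rule ennreal_leI)
      have hh: "(h - 1/2) powr (- \<alpha>') \<le> (h / 2) powr (- \<alpha>')"
        using h1 a0 by (intro powr_mono2') auto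
      have h2: "h / 2 = r / (6 * d)" unfolding h3 by simp
      have "(h / 2) powr (- \<alpha>') = (6 * d) powr \<alpha>' * r powr (- \<alpha>')"
        unfolding h2 using rge1 d1 by (simp add: powr_h)
      with hh have T1: "t powr p * (intensity P * (C0 * (h - 1/2) powr (- \<alpha>')))
          \<le> t powr p * (intensity P * (C0 * ((6 * d) powr \<alpha>' * r powr (- \<alpha>'))))"
        using m C0 by (intro mult_left_mono) auto
      also have "\<dots> = (intensity P * C0 * (6 * d) powr \<alpha>') * (r powr (b * p) * r powr (- \<alpha>'))"
        unfolding t_def by (simp add: powr_powr mult_ac)
      also have "r powr (b * p) * r powr (- \<alpha>') = r powr (- e1)"
        unfolding e1_def by (simp add: powr_add[symmetric])
      also have "r powr (- e1) \<le> r powr (- e)"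
        using rge1 unfolding e_def by (intro powr_mono) auto
      finally have A: "t powr p * (intensity P * (C0 * (h - 1/2) powr (- \<alpha>')))
          \<le> (intensity P * C0 * (6 * d) powr \<alpha>') * r powr (- e)"
        using m C0 by (simp add: mult_left_mono)
      have "real (card (Kc R :: ('a \<Rightarrow> int) set)) powr (p + \<beta>) \<le> 14 powr (d * (p + \<beta>)) * r powr (d * (p + \<beta>))"
        using card_Kc_powr[OF rge1, of "p + \<beta>"] p \<beta> unfolding d_def R_def by simp
      then have "t powr (- \<beta>) * (2 * real (card (Kc R :: ('a \<Rightarrow> int) set)) powr (p + \<beta>) * \<rho>)
          \<le> t powr (- \<beta>) * (2 * (14 powr (d * (p + \<beta>)) * r powr (d * (p + \<beta>))) * \<rho>)"
        using \<rho> by (intro mult_left_mono mult_right_mono) auto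
      also have "\<dots> = (2 * 14 powr (d * (\<gamma> - 1)) * \<rho>) * (r powr (- (b * \<beta>)) * r powr (d * (\<gamma> - 1)))"
        unfolding t_def pbg by (simp add: powr_powr mult_ac)
      also have "r powr (- (b * \<beta>)) * r powr (d * (\<gamma> - 1)) = r powr (- e2)"
        unfolding e2_def by (simp add: powr_add[symmetric])
      also have "r powr (- e2) \<le> r powr (- e)"
        using rge1 unfolding e_def by (intro powr_mono) auto
      finally have B: "t powr (- \<beta>) * (2 * real (card (Kc R :: ('a \<Rightarrow> int) set)) powr (p + \<beta>) * \<rho>)
          \<le> (2 * 14 powr (d * (\<gamma> - 1)) * \<rho>) * r powr (- e)"
        using \<rho> by (simp add: mult_left_mono)
      from add_mono[OF A B] show "t powr p * (intensity P * (C0 * (h - 1/2) powr (- \<alpha>'))) +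
          t powr (- \<beta>) * (2 * real (card (Kc R :: ('a \<Rightarrow> int) set)) powr (p + \<beta>) * \<rho>) \<le> C * r powr (- e)"
        unfolding C_def by (simp add: distrib_right)
    qed
    finally show "(\<integral>\<^sup>+\<xi>. Tjk S p j k \<xi> \<partial>P) \<le> ennreal (C * (S * 2 ^ j) powr (- e))"
      unfolding r_def .
  qed
qed

end

lemma geom_poly_decay:
  fixes q N :: real
  assumes q: "0 \<le> q" "q < 1" and N: "0 \<le> N"
  shows "\<exists>C\<ge>0. \<forall>n::nat. q ^ n \<le> C * (real n + 1) powr (- N)"
proof (cases "q = 0")
  case True
  show ?thesis
  proof (intro exI[of _ 1] conjI allI)
    fix n :: nat
    show "q ^ n \<le> 1 * (real n + 1) powr (- N)"
      using True by (cases n) auto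
  qed simp
next
  case False
  then have qpos: "0 < q" using q by simp
  define \<mu> where "\<mu> = - ln q"
  have \<mu>: "0 < \<mu>" unfolding \<mu>_def using qpos q by simp
  define K :: nat where "K = nat \<lceil>N\<rceil> + 1"
  have K: "0 < K" "N \<le> real K" unfolding K_def by linarith+
  define c0 where "c0 = min 1 (\<mu> / real K)"
  have c0: "0 < c0" "c0 \<le> 1" "c0 \<le> \<mu> / real K" unfolding c0_def using \<mu> K by auto
  show ?thesis
  proof (intro exI[of _ "c0 powr (- real K)"] conjI allI)
    show "0 \<le> c0 powr (- real K)" by simp
    fix n :: nat
    have qn: "q ^ n = exp (- (\<mu> * real n))"
    proof -
      have "q = exp (- \<mu>)" unfolding \<mu>_def using qpos by simp
      then have "q ^ n = exp (- \<mu>) ^ n" by simp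
      also have "\<dots> = exp (real n * (- \<mu>))" by (rule exp_of_nat_mult[symmetric])
      finally show ?thesis by simp
    qed
    have "c0 * (real n + 1) \<le> 1 + \<mu> * real n / real K"
    proof -
      have "c0 * real n \<le> \<mu> / real K * real n" using c0 by (intro mult_right_mono) auto
      then show ?thesis using c0 by (simp add: distrib_left)
    qed
    then have "(c0 * (real n + 1)) ^ K \<le> (1 + \<mu> * real n / real K) ^ K"
      using c0 by (intro power_mono) auto
    also have "\<dots> \<le> exp (\<mu> * real n)"
    proof (rule exp_ge_one_plus_x_over_n_power_n)
      have "0 \<le> \<mu> * real n" using \<mu> by simp
      then show "- real K \<le> \<mu> * real n" by linarith
    qed (use K in auto)
    finally have lb: "(c0 * (real n + 1)) ^ K \<le> exp (\<mu> * real n)" .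
    have pos: "0 < (c0 * (real n + 1)) ^ K" using c0 by simp
    have "q ^ n = 1 / exp (\<mu> * real n)" unfolding qn by (simp add: exp_minus field_simps)
    also have "\<dots> \<le> 1 / (c0 * (real n + 1)) ^ K" using lb pos by (intro divide_left_mono) auto
    also have "1 / (c0 * (real n + 1)) ^ K = c0 powr (- real K) * (real n + 1) powr (- real K)"
    proof -
      have "(c0 * (real n + 1)) ^ K = (c0 * (real n + 1)) powr real K" using c0 by (simp add: powr_realpow)
      then have "1 / (c0 * (real n + 1)) ^ K = (c0 * (real n + 1)) powr (- real K)"
        by (simp add: powr_minus divide_inverse)
      then show ?thesis by (simp add: powr_mult)
    qed
    also have "\<dots> \<le> c0 powr (- real K) * (real n + 1) powr (- N)"
      using K by (intro mult_left_mono powr_mono) auto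
    finally show "q ^ n \<le> c0 powr (- real K) * (real n + 1) powr (- N)" .
  qed
qed

context pp
begin

interpretation prob_space P by (rule prob)

lemma indep_nn:
  fixes F G :: "'a set \<Rightarrow> ennreal"
  assumes iv: "indep_var N_space (\<lambda>\<xi>. \<xi> \<inter> A) N_space (\<lambda>\<xi>. \<xi> \<inter> B)"
    and F: "F \<in> borel_measurable N_space" and G: "G \<in> borel_measurable N_space"
  shows "(\<integral>\<^sup>+\<xi>. F (\<xi> \<inter> A) * G (\<xi> \<inter> B) \<partial>P) = (\<integral>\<^sup>+\<xi>. F (\<xi> \<inter> A) \<partial>P) * (\<integral>\<^sup>+\<xi>. G (\<xi> \<inter> B) \<partial>P)"
proof -
  have iv2: "indep_var borel (F \<circ> (\<lambda>\<xi>. \<xi> \<inter> A)) borel (G \<circ> (\<lambda>\<xi>. \<xi> \<inter> B))"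
    by (rule indep_var_compose[OF iv F G])
  define X where "X = case_bool (F \<circ> (\<lambda>\<xi>. \<xi> \<inter> A)) (G \<circ> (\<lambda>\<xi>. \<xi> \<inter> B))"
  have cb: "case_bool borel borel = (\<lambda>_::bool. (borel :: ennreal measure))"
    by (rule ext) (simp split: bool.split)
  have ivs: "indep_vars (\<lambda>_. borel) X UNIV"
    using iv2 unfolding indep_var_def X_def cb .
  have finb: "finite (UNIV :: bool set)" by simp
  from indep_vars_nn_integral[OF finb ivs]
  have "(\<integral>\<^sup>+\<omega>. (\<Prod>i\<in>UNIV. X i \<omega>) \<partial>P) = (\<Prod>i\<in>UNIV. \<integral>\<^sup>+\<omega>. X i \<omega> \<partial>P)" by simp
  then show ?thesis by (simp add: UNIV_bool X_def mult.commute comp_def)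
qed

lemma q_less1:
  assumes m: "intensity P > 0"
  shows "prob {\<xi>\<in>space P. cnt unit_cube \<xi> = 0} < 1"
proof (rule ccontr)
  assume "\<not> prob {\<xi>\<in>space P. cnt unit_cube \<xi> = 0} < 1"
  then have "prob {\<xi>\<in>space P. cnt unit_cube \<xi> = 0} = 1" using prob_le_1 by (simp add: not_less antisym)
  then have "AE \<xi> in P. \<xi> \<in> {\<xi>\<in>space P. cnt unit_cube \<xi> = 0}" by (rule AE_prob_1)
  then have ae: "AE \<xi> in P. real (card (\<xi> \<inter> unit_cube)) = 0" by (auto simp: cnt_def)
  have "intensity P = (\<integral>\<xi>. 0 \<partial>P)"
    unfolding intensity_def by (rule integral_cong_AE) (use ae realcnt_meas[OF bounded_cube borel_cube] in \<open>auto simp: cnt_def\<close>)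
  then show False using m by simp
qed

end

lemma prod_of_bool_ennreal:
  assumes "finite I"
  shows "(\<Prod>i\<in>I. (of_bool (P i) :: ennreal)) = of_bool (\<forall>i\<in>I. P i)"
  using assms by (induction I rule: finite_induct) auto

definition blk :: "'a::euclidean_space \<Rightarrow> real \<Rightarrow> 'a \<Rightarrow> nat \<Rightarrow> 'a set" where
  "blk v s e i = (+) (v + (real i * s) *\<^sub>R e) ` unit_cube"

lemma bounded_blk: "bounded (blk v s e i)"
  unfolding blk_def by (intro bounded_translation bounded_cube)

lemma borel_blk: "blk v s e i \<in> sets borel"
  unfolding blk_def by (intro borel_translate borel_cube)

lemma blk_sep:
  fixes e :: "'a::euclidean_space"
  assumes e: "e \<in> Basis" and i: "i < n" and a: "a \<in> blk v (1 + L) e n" and b: "b \<in> blk v (1 + L) e i"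
    and L: "0 < L"
  shows "L \<le> dist a b"
proof -
  obtain u where u: "u \<in> unit_cube" "a = v + (real n * (1 + L)) *\<^sub>R e + u" using a unfolding blk_def by auto
  obtain u' where u': "u' \<in> unit_cube" "b = v + (real i * (1 + L)) *\<^sub>R e + u'" using b unfolding blk_def by auto
  have "0 \<le> u \<bullet> e" "u' \<bullet> e \<le> 1" using u(1) u'(1) e unfolding cube_mem by auto
  have "1 \<le> real n - real i" using i by simp
  then have "(1 + L) \<le> (real n - real i) * (1 + L)" using L by simp
  have "(a - b) \<bullet> e = (real n - real i) * (1 + L) + u \<bullet> e - u' \<bullet> e"
    using e by (simp add: u(2) u'(2) inner_diff_left inner_add_left algebra_simps)
  then have "L \<le> (a - b) \<bullet> e"
    using \<open>0 \<le> u \<bullet> e\<close> \<open>u' \<bullet> e \<le> 1\<close> \<open>(1 + L) \<le> (real n - real i) * (1 + L)\<close> by linarith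
  also have "\<dots> \<le> norm (a - b)" using Basis_le_norm[OF e, of "a - b"] by linarith
  finally show ?thesis by (simp add: dist_norm)
qed

context pp
begin

interpretation prob_space P by (rule prob)

lemma V_meas_N:
  assumes "bounded B" "B \<in> sets borel"
  shows "(\<lambda>\<eta>. (of_bool (cnt B \<eta> = 0) :: ennreal)) \<in> borel_measurable N_space"
  by (rule measurable_compose[OF cnt_meas_N[OF assms]]) simp

lemma V_integral:
  assumes "bounded B" "B \<in> sets borel"
  shows "(\<integral>\<^sup>+\<xi>. (of_bool (cnt B \<xi> = 0) :: ennreal) \<partial>P) = ennreal (prob {\<xi>\<in>space P. cnt B \<xi> = 0})"
proof -
  have "(\<integral>\<^sup>+\<xi>. (of_bool (cnt B \<xi> = 0) :: ennreal) \<partial>P) = (\<integral>\<^sup>+\<xi>. indicator {\<xi>\<in>space P. cnt B \<xi> = 0} \<xi> \<partial>P)"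
    by (rule nn_integral_cong) (simp add: indicator_def)
  also have "\<dots> = emeasure P {\<xi>\<in>space P. cnt B \<xi> = 0}" by (rule nn_integral_indicator[OF sets_cnt[OF assms]])
  finally show ?thesis by (simp add: emeasure_eq_measure)
qed

lemma cnt_Int_self: "cnt B (\<xi> \<inter> B) = cnt B \<xi>"
  unfolding cnt_def by (simp add: Int_assoc)

lemma blocks_prod:
  assumes hL: "\<forall>A B. A \<in> sets borel \<longrightarrow> B \<in> sets borel \<longrightarrow> (\<forall>a\<in>A. \<forall>b\<in>B. dist a b \<ge> L) \<longrightarrow>
      indep_var N_space (\<lambda>\<xi>. \<xi> \<inter> A) N_space (\<lambda>\<xi>. \<xi> \<inter> B)"
    and L: "0 < L" and e: "e \<in> Basis"
  shows "(\<integral>\<^sup>+\<xi>. (\<Prod>i<n. (of_bool (cnt (blk v (1 + L) e i) \<xi> = 0) :: ennreal)) \<partial>P)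
      = ennreal (prob {\<xi>\<in>space P. cnt unit_cube \<xi> = 0}) ^ n"
proof (induction n)
  case 0
  then show ?case by (simp add: emeasure_space_1)
next
  case (Suc n)
  define U where "U = (\<Union>i<n. blk v (1 + L) e i)"
  have U: "bounded U" "U \<in> sets borel" unfolding U_def
    by (auto intro!: bounded_UN bounded_blk borel_blk)
  have pU: "(\<Prod>i<n. (of_bool (cnt (blk v (1 + L) e i) \<xi> = 0) :: ennreal)) = of_bool (cnt U \<xi> = 0)"
    if sp: "\<xi> \<in> space P" for \<xi>
  proof -
    have fin: "finite (\<xi> \<inter> U)" using finite_int_space[OF sp U(1)] .
    have fin': "finite (\<xi> \<inter> blk v (1 + L) e i)" for i using finite_int_space[OF sp bounded_blk] .
    have e1: "cnt (blk v (1 + L) e i) \<xi> = 0 \<longleftrightarrow> \<xi> \<inter> blk v (1 + L) e i = {}" for i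
      using fin'[of i] by (simp add: cnt_def)
    have e2: "cnt U \<xi> = 0 \<longleftrightarrow> \<xi> \<inter> U = {}" using fin by (simp add: cnt_def)
    have e3: "\<xi> \<inter> U = {} \<longleftrightarrow> (\<forall>i\<in>{..<n}. \<xi> \<inter> blk v (1 + L) e i = {})"
      unfolding U_def by blast
    have "(\<forall>i\<in>{..<n}. cnt (blk v (1 + L) e i) \<xi> = 0) \<longleftrightarrow> cnt U \<xi> = 0"
      unfolding e1 e2 e3 ..
    then show ?thesis by (simp add: prod_of_bool_ennreal)
  qed
  have iv: "indep_var N_space (\<lambda>\<xi>. \<xi> \<inter> blk v (1 + L) e n) N_space (\<lambda>\<xi>. \<xi> \<inter> U)"
  proof -
    have sep: "\<forall>a\<in>blk v (1 + L) e n. \<forall>b\<in>U. L \<le> dist a b"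
    proof (intro ballI)
      fix a b assume a: "a \<in> blk v (1 + L) e n" and b: "b \<in> U"
      then obtain i where i: "i < n" "b \<in> blk v (1 + L) e i" unfolding U_def by auto
      show "L \<le> dist a b" by (rule blk_sep[OF e i(1) a i(2) L])
    qed
    show ?thesis by (rule hL[rule_format, OF borel_blk U(2)]) (use sep in blast)
  qed
  have q: "(\<integral>\<^sup>+\<xi>. (of_bool (cnt (blk v (1 + L) e n) \<xi> = 0) :: ennreal) \<partial>P)
      = ennreal (prob {\<xi>\<in>space P. cnt unit_cube \<xi> = 0})"
    using stat_nn_integral[OF bounded_cube borel_cube, of "\<lambda>k. (of_bool (k = 0) :: ennreal)" "v + (real n * (1 + L)) *\<^sub>R e"]
      V_integral[OF bounded_cube borel_cube]
    by (simp add: blk_def)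
  have "(\<integral>\<^sup>+\<xi>. (\<Prod>i<Suc n. (of_bool (cnt (blk v (1 + L) e i) \<xi> = 0) :: ennreal)) \<partial>P)
      = (\<integral>\<^sup>+\<xi>. (of_bool (cnt (blk v (1 + L) e n) (\<xi> \<inter> blk v (1 + L) e n) = 0) :: ennreal) *
          (of_bool (cnt U (\<xi> \<inter> U) = 0) :: ennreal) \<partial>P)"
    by (rule nn_integral_cong) (simp add: pU cnt_Int_self mult.commute)
  also have "\<dots> = (\<integral>\<^sup>+\<xi>. (of_bool (cnt (blk v (1 + L) e n) (\<xi> \<inter> blk v (1 + L) e n) = 0) :: ennreal) \<partial>P) *
      (\<integral>\<^sup>+\<xi>. (of_bool (cnt U (\<xi> \<inter> U) = 0) :: ennreal) \<partial>P)"
    by (rule indep_nn[OF iv V_meas_N[OF bounded_blk borel_blk] V_meas_N[OF U]])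
  also have "(\<integral>\<^sup>+\<xi>. (of_bool (cnt U (\<xi> \<inter> U) = 0) :: ennreal) \<partial>P)
      = (\<integral>\<^sup>+\<xi>. (\<Prod>i<n. (of_bool (cnt (blk v (1 + L) e i) \<xi> = 0) :: ennreal)) \<partial>P)"
    by (rule nn_integral_cong) (simp add: pU cnt_Int_self)
  finally show ?case unfolding Suc.IH by (simp add: cnt_Int_self q)
qed

end

lemma Lambda_mono: "a \<le> b \<Longrightarrow> Lambda a g \<subseteq> Lambda b g"
  unfolding lam_mem[abs_def] by (auto simp: subset_iff lam_mem)

context pp
begin

interpretation prob_space P by (rule prob)

lemma void_blocks:
  assumes hL: "\<forall>A B. A \<in> sets borel \<longrightarrow> B \<in> sets borel \<longrightarrow> (\<forall>a\<in>A. \<forall>b\<in>B. dist a b \<ge> L) \<longrightarrow>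
      indep_var N_space (\<lambda>\<xi>. \<xi> \<inter> A) N_space (\<lambda>\<xi>. \<xi> \<inter> B)"
    and L: "0 < L" and l: "1 \<le> l"
  shows "prob {\<xi>\<in>space P. cnt (Lambda l g) \<xi> = 0}
     \<le> prob {\<xi>\<in>space P. cnt unit_cube \<xi> = 0} ^ (nat \<lfloor>(2 * l - 1) / (1 + L)\<rfloor> + 1)"
proof -
  obtain e :: 'a where e: "e \<in> Basis" using nonempty_Basis by blast
  define v where "v = g - l *\<^sub>R One"
  define s where "s = 1 + L"
  have s: "0 < s" unfolding s_def using L by simp
  define n where "n = nat \<lfloor>(2 * l - 1) / s\<rfloor> + 1"
  define q where "q = prob {\<xi>\<in>space P. cnt unit_cube \<xi> = 0}"
  have sub: "blk v s e i \<subseteq> Lambda l g" if i: "i < n" for i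
  proof
    fix w assume "w \<in> blk v s e i"
    then obtain u where u: "u \<in> unit_cube" "w = v + (real i * s) *\<^sub>R e + u" unfolding blk_def by auto
    have "real i \<le> real (nat \<lfloor>(2 * l - 1) / s\<rfloor>)" using i unfolding n_def by simp
    also have "\<dots> \<le> (2 * l - 1) / s"
    proof -
      have "0 \<le> (2 * l - 1) / s" using l s by simp
      then show ?thesis by linarith
    qed
    finally have "real i * s \<le> 2 * l - 1" using s by (simp add: pos_le_divide_eq)
    moreover have "0 \<le> real i * s" using s by simp
    ultimately have is1: "0 \<le> real i * s" "real i * s \<le> 2 * l - 1" by auto
    show "w \<in> Lambda l g" unfolding lam_mem
    proof
      fix b :: 'a assume b: "b \<in> Basis"
      have ub: "0 \<le> u \<bullet> b" "u \<bullet> b \<le> 1" using u(1) b unfolding cube_mem by auto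
      have wb: "w \<bullet> b = g \<bullet> b - l + real i * s * (e \<bullet> b) + u \<bullet> b"
        using b by (simp add: u(2) v_def inner_diff_left inner_add_left)
      have "0 \<le> e \<bullet> b" "e \<bullet> b \<le> 1" using e b by (auto simp: inner_Basis)
      then have "0 \<le> real i * s * (e \<bullet> b)" "real i * s * (e \<bullet> b) \<le> real i * s"
        using is1 by (auto intro: mult_left_le)
      then show "g \<bullet> b - l \<le> w \<bullet> b \<and> w \<bullet> b \<le> g \<bullet> b + l"
        using wb ub is1 by linarith
    qed
  qed
  have pw: "(of_bool (cnt (Lambda l g) \<xi> = 0) :: ennreal) \<le> (\<Prod>i<n. (of_bool (cnt (blk v s e i) \<xi> = 0) :: ennreal))"
    if sp: "\<xi> \<in> space P" for \<xi>
  proof (cases "cnt (Lambda l g) \<xi> = 0")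
    case True
    then have "\<xi> \<inter> Lambda l g = {}" using finite_int_space[OF sp bounded_Lambda] by (simp add: cnt_def)
    have "\<xi> \<inter> blk v s e i = {}" if "i < n" for i using sub[OF that] \<open>\<xi> \<inter> Lambda l g = {}\<close> by blast
    then have "\<forall>i\<in>{..<n}. cnt (blk v s e i) \<xi> = 0" by (simp add: cnt_def)
    then show ?thesis by (simp add: prod_of_bool_ennreal)
  qed simp
  have "ennreal (prob {\<xi>\<in>space P. cnt (Lambda l g) \<xi> = 0}) = (\<integral>\<^sup>+\<xi>. (of_bool (cnt (Lambda l g) \<xi> = 0) :: ennreal) \<partial>P)"
    by (rule V_integral[symmetric, OF bounded_Lambda borel_Lambda])
  also have "\<dots> \<le> (\<integral>\<^sup>+\<xi>. (\<Prod>i<n. (of_bool (cnt (blk v s e i) \<xi> = 0) :: ennreal)) \<partial>P)"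
    by (rule nn_integral_mono) (rule pw)
  also have "\<dots> = ennreal q ^ n" unfolding s_def q_def by (rule blocks_prod[OF hL L e])
  also have "\<dots> = ennreal (q ^ n)" by (simp add: ennreal_power q_def)
  finally show ?thesis unfolding q_def n_def s_def by (simp add: ennreal_le_iff)
qed

lemma decouple:
  assumes hL: "\<forall>A B. A \<in> sets borel \<longrightarrow> B \<in> sets borel \<longrightarrow> (\<forall>a\<in>A. \<forall>b\<in>B. dist a b \<ge> L) \<longrightarrow>
      indep_var N_space (\<lambda>\<xi>. \<xi> \<inter> A) N_space (\<lambda>\<xi>. \<xi> \<inter> B)"
    and L: "0 < L" and R: "1 \<le> R" and p: "0 \<le> p"
  shows "(\<integral>\<^sup>+\<xi>. N0 \<xi> * (ennreal (of_bool (cnt (Lambda h g) \<xi> = 0)) * ennreal (real (cnt (Lambda R 0) \<xi>) powr p)) \<partial>P)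
     \<le> (\<integral>\<^sup>+\<xi>. N0 \<xi> * ennreal (real (cnt (Lambda R 0) \<xi>) powr p) \<partial>P) *
        ennreal (prob {\<xi>\<in>space P. cnt (Lambda (h - L) g) \<xi> = 0})"
proof -
  define A where "A = Lambda R (0::'a) - Lambda h g"
  define Q2 where "Q2 = Lambda (h - L) g"
  have sep: "\<forall>a\<in>A. \<forall>c\<in>Q2. L \<le> dist a c"
  proof (intro ballI)
    fix a c assume a: "a \<in> A" and c: "c \<in> Q2"
    from a have "a \<notin> Lambda h g" unfolding A_def by blast
    then obtain b :: 'a where b: "b \<in> Basis" "\<not> (g \<bullet> b - h \<le> a \<bullet> b \<and> a \<bullet> b \<le> g \<bullet> b + h)"
      unfolding lam_mem by blast
    have cb: "g \<bullet> b - (h - L) \<le> c \<bullet> b" "c \<bullet> b \<le> g \<bullet> b + (h - L)" using c b(1) unfolding Q2_def lam_mem by auto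
    have "L \<le> \<bar>(a - c) \<bullet> b\<bar>" using b(2) cb by (auto simp: inner_diff_left)
    also have "\<dots> \<le> norm (a - c)" by (rule Basis_le_norm[OF b(1)])
    finally show "L \<le> dist a c" by (simp add: dist_norm)
  qed
  have iv: "indep_var N_space (\<lambda>\<xi>. \<xi> \<inter> A) N_space (\<lambda>\<xi>. \<xi> \<inter> Q2)"
  proof -
    have Ab: "A \<in> sets borel" unfolding A_def by (intro sets.Diff borel_Lambda)
    have Qb: "Q2 \<in> sets borel" unfolding Q2_def by (rule borel_Lambda)
    show ?thesis by (rule hL[rule_format, OF Ab Qb]) (use sep in blast)
  qed
  define F :: "'a set \<Rightarrow> ennreal" where
    "F \<eta> = ennreal (real (cnt unit_cube \<eta>) * real (cnt (Lambda R 0) \<eta>) powr p)" for \<eta>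
  have m1: "(\<lambda>\<eta>. real (cnt unit_cube \<eta>)) \<in> borel_measurable N_space"
    by (rule measurable_compose[OF cnt_meas_N[OF bounded_cube borel_cube]]) simp
  have m2: "(\<lambda>\<eta>. real (cnt (Lambda R (0::'a)) \<eta>) powr p) \<in> borel_measurable N_space"
    by (rule measurable_compose[OF cnt_meas_N[OF bounded_Lambda borel_Lambda]]) simp
  have Fm: "F \<in> borel_measurable N_space" unfolding F_def
    by (rule measurable_compose[OF borel_measurable_times[OF m1 m2] measurable_ennreal])
  have Gm: "(\<lambda>\<eta>. (of_bool (cnt Q2 \<eta> = 0) :: ennreal)) \<in> borel_measurable N_space"
    unfolding Q2_def by (rule V_meas_N[OF bounded_Lambda borel_Lambda])
  have cubeR: "unit_cube \<subseteq> (Lambda R 0 :: 'a set)" by (rule cube_sub_Lambda[OF R])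
  have Q2sub: "Q2 \<subseteq> Lambda h g" unfolding Q2_def using L by (intro Lambda_mono) simp
  have pw: "N0 \<xi> * (ennreal (of_bool (cnt (Lambda h g) \<xi> = 0)) * ennreal (real (cnt (Lambda R 0) \<xi>) powr p))
      \<le> F (\<xi> \<inter> A) * (of_bool (cnt Q2 (\<xi> \<inter> Q2) = 0) :: ennreal)" if sp: "\<xi> \<in> space P" for \<xi>
  proof (cases "cnt (Lambda h g) \<xi> = 0")
    case True
    then have emp: "\<xi> \<inter> Lambda h g = {}" using finite_int_space[OF sp bounded_Lambda] by (simp add: cnt_def)
    have e1: "\<xi> \<inter> A \<inter> unit_cube = \<xi> \<inter> unit_cube" using emp cubeR unfolding A_def by blast
    have e2: "\<xi> \<inter> A \<inter> Lambda R 0 = \<xi> \<inter> Lambda R 0" using emp unfolding A_def by blast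
    have "\<xi> \<inter> Q2 = {}" using emp Q2sub by blast
    then have e3: "cnt Q2 (\<xi> \<inter> Q2) = 0" by (simp add: cnt_def)
    have "F (\<xi> \<inter> A) = N0 \<xi> * ennreal (real (cnt (Lambda R 0) \<xi>) powr p)"
      unfolding F_def N0_def cnt_def e1 e2 by (simp add: ennreal_mult)
    then show ?thesis using True e3 by simp
  qed simp
  have pwF: "F (\<xi> \<inter> A) \<le> N0 \<xi> * ennreal (real (cnt (Lambda R 0) \<xi>) powr p)" if sp: "\<xi> \<in> space P" for \<xi>
  proof -
    have "card (\<xi> \<inter> A \<inter> unit_cube) \<le> card (\<xi> \<inter> unit_cube)"
      by (rule card_mono[OF finite_int_space[OF sp bounded_cube]]) blast
    moreover have "card (\<xi> \<inter> A \<inter> Lambda R 0) \<le> card (\<xi> \<inter> Lambda R 0)"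
      by (rule card_mono[OF finite_int_space[OF sp bounded_Lambda]]) blast
    ultimately have "real (card (\<xi> \<inter> A \<inter> unit_cube)) * real (card (\<xi> \<inter> A \<inter> Lambda R 0)) powr p
        \<le> real (card (\<xi> \<inter> unit_cube)) * real (card (\<xi> \<inter> Lambda R 0)) powr p"
      using p by (intro mult_mono powr_mono2) auto
    then show ?thesis unfolding F_def N0_def cnt_def by (simp add: ennreal_mult[symmetric] ennreal_leI)
  qed
  have "(\<integral>\<^sup>+\<xi>. N0 \<xi> * (ennreal (of_bool (cnt (Lambda h g) \<xi> = 0)) * ennreal (real (cnt (Lambda R 0) \<xi>) powr p)) \<partial>P)
      \<le> (\<integral>\<^sup>+\<xi>. F (\<xi> \<inter> A) * (of_bool (cnt Q2 (\<xi> \<inter> Q2) = 0) :: ennreal) \<partial>P)"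
    by (rule nn_integral_mono) (rule pw)
  also have "\<dots> = (\<integral>\<^sup>+\<xi>. F (\<xi> \<inter> A) \<partial>P) * (\<integral>\<^sup>+\<xi>. (of_bool (cnt Q2 (\<xi> \<inter> Q2) = 0) :: ennreal) \<partial>P)"
    by (rule indep_nn[OF iv Fm Gm])
  also have "(\<integral>\<^sup>+\<xi>. (of_bool (cnt Q2 (\<xi> \<inter> Q2) = 0) :: ennreal) \<partial>P) = ennreal (prob {\<xi>\<in>space P. cnt Q2 \<xi> = 0})"
    unfolding cnt_Int_self Q2_def by (rule V_integral[OF bounded_Lambda borel_Lambda])
  also have "(\<integral>\<^sup>+\<xi>. F (\<xi> \<inter> A) \<partial>P) \<le> (\<integral>\<^sup>+\<xi>. N0 \<xi> * ennreal (real (cnt (Lambda R 0) \<xi>) powr p) \<partial>P)"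
    by (rule nn_integral_mono) (rule pwF)
  finally show ?thesis unfolding Q2_def by (simp add: mult_right_mono)
qed

lemma case2:
  assumes p: "1 \<le> p" and m: "intensity P > 0" and rh: "rho P (1 + p) < \<infinity>"
    and fr: "finite_range_dep P"
  shows "palm_exp P (\<lambda>\<xi>. deg0_pow \<xi> p) < \<infinity>"
proof -
  obtain L where L: "0 < L" and hL: "\<forall>A B. A \<in> sets borel \<longrightarrow> B \<in> sets borel \<longrightarrow> (\<forall>a\<in>A. \<forall>b\<in>B. dist a b \<ge> L) \<longrightarrow>
      indep_var N_space (\<lambda>\<xi>. \<xi> \<inter> A) N_space (\<lambda>\<xi>. \<xi> \<inter> B)"
    using fr unfolding finite_range_dep_def by blast
  define d where "d = real DIM('a)"
  have d1: "1 \<le> d" unfolding d_def using DIM_positive[where 'a='a] by linarith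
  define S where "S = 6 * d * (1 + L) + 1"
  have S: "2 * real DIM('a) < S"
  proof -
    have "6 * d \<le> 6 * d * (1 + L)" using d1 L by simp
    moreover have "2 * d < 6 * d + 1" using d1 by simp
    ultimately have "2 * d < S" unfolding S_def by linarith
    then show ?thesis unfolding d_def .
  qed
  have Spos: "0 < S" using d1 L unfolding S_def by (simp add: add_pos_nonneg)
  have rh': "rho P (p + 1) < \<infinity>" using rh by (simp add: add.commute)
  define \<rho> where "\<rho> = enn2real (rho P (p + 1))"
  have \<rho>: "rho P (p + 1) = ennreal \<rho>" "0 \<le> \<rho>" unfolding \<rho>_def using rh' by (auto simp: ennreal_enn2real_if)
  have A0: "(\<integral>\<^sup>+\<xi>. N0 \<xi> * ennreal (real (cnt (Lambda (2 * S + 1) 0) \<xi>) powr p) \<partial>P) < \<infinity>"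
    using moment_bound[OF p, of "2 * S + 1"] Spos rh' by (auto simp: ennreal_mult_less_top le_less_trans)
  define q where "q = prob {\<xi>\<in>space P. cnt unit_cube \<xi> = 0}"
  have q: "0 \<le> q" "q < 1" unfolding q_def using q_less1[OF m] by auto
  define N where "N = d * p + 1"
  have N: "0 \<le> N" unfolding N_def using d1 p by simp
  obtain Cq where Cq: "0 \<le> Cq" "\<And>n::nat. q ^ n \<le> Cq * (real n + 1) powr (- N)"
    using geom_poly_decay[OF q N] by blast
  define s where "s = 1 + L"
  have s: "0 < s" unfolding s_def using L by simp
  define C where "C = 2 * 14 powr (d * p) * \<rho> * Cq * (6 * d * s) powr N"
  have C: "0 \<le> C" unfolding C_def using \<rho> Cq by simp
  have e: "(0::real) < 1" by simp
  show ?thesis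
  proof (rule final_finite[OF S _ m A0 e C])
    show "0 \<le> p" using p by simp
    fix j :: nat and k :: "'a \<Rightarrow> int" assume k: "k \<in> Kset"
    define r where "r = S * 2 ^ j"
    have rS: "S \<le> r"
    proof -
      have "(1::real) \<le> 2 ^ j" by simp
      then show ?thesis unfolding r_def using Spos by simp
    qed
    have rge1: "1 \<le> r" using rS d1 L unfolding S_def by (smt (verit) mult_nonneg_nonneg)
    define h where "h = r / real (3 * DIM('a))"
    have h3: "h = r / (3 * d)" unfolding h_def d_def by simp
    have h2L: "2 * (1 + L) \<le> h"
    proof -
      have "6 * d * (1 + L) \<le> r" using rS unfolding S_def by simp
      then show ?thesis unfolding h3 using d1 by (simp add: field_simps)
    qed
    define l where "l = h - L"
    have lh: "h / 2 \<le> l" unfolding l_def using h2L L by simp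
    have l1: "1 \<le> l" using lh h2L L by simp
    define R where "R = 4 * r + 1"
    have R1: "1 \<le> R" unfolding R_def using rge1 by simp
    define n where "n = nat \<lfloor>(2 * l - 1) / (1 + L)\<rfloor> + 1"
    have nlow: "r / (6 * d * s) \<le> real n + 1"
    proof -
      have x0: "0 \<le> (2 * l - 1) / s" using l1 s by simp
      have "(2 * l - 1) / s \<le> real n" unfolding n_def s_def[symmetric] using x0 by linarith
      moreover have "l / s \<le> (2 * l - 1) / s" using l1 s by (intro divide_right_mono) auto
      moreover have "h / 2 / s \<le> l / s" using lh s by (intro divide_right_mono) auto
      moreover have "h / 2 / s = r / (6 * d * s)" unfolding h3 by (simp add: field_simps)
      ultimately show ?thesis by linarith
    qed
    have rpos: "0 < r / (6 * d * s)" using rge1 d1 s by simp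
    have "(\<integral>\<^sup>+\<xi>. Tjk S p j k \<xi> \<partial>P) =
        (\<integral>\<^sup>+\<xi>. N0 \<xi> * (ennreal (of_bool (cnt (Lambda h (grid h k)) \<xi> = 0)) * ennreal (real (cnt (Lambda R 0) \<xi>) powr p)) \<partial>P)"
      unfolding Tjk_def h_def r_def R_def by (simp add: mult.assoc)
    also have "\<dots> \<le> (\<integral>\<^sup>+\<xi>. N0 \<xi> * ennreal (real (cnt (Lambda R 0) \<xi>) powr p) \<partial>P) *
        ennreal (prob {\<xi>\<in>space P. cnt (Lambda l (grid h k)) \<xi> = 0})"
      unfolding l_def by (rule decouple[OF hL L R1]) (use p in simp)
    also have "\<dots> \<le> (ennreal (2 * real (card (Kc R :: ('a \<Rightarrow> int) set)) powr p) * ennreal \<rho>) * ennreal (q ^ n)"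
    proof (rule mult_mono)
      show "(\<integral>\<^sup>+\<xi>. N0 \<xi> * ennreal (real (cnt (Lambda R 0) \<xi>) powr p) \<partial>P)
          \<le> ennreal (2 * real (card (Kc R :: ('a \<Rightarrow> int) set)) powr p) * ennreal \<rho>"
        using moment_bound[OF p, of R] R1 \<rho> by simp
      show "ennreal (prob {\<xi>\<in>space P. cnt (Lambda l (grid h k)) \<xi> = 0}) \<le> ennreal (q ^ n)"
        using void_blocks[OF hL L l1, of "grid h k"] unfolding q_def n_def by (intro ennreal_leI) simp
    qed auto
    also have "\<dots> = ennreal (2 * real (card (Kc R :: ('a \<Rightarrow> int) set)) powr p * \<rho> * q ^ n)"
      using \<rho> q by (simp add: ennreal_mult)
    also have "\<dots> \<le> ennreal (C * r powr (- 1))"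
    proof (rule ennreal_leI)
      have cK: "real (card (Kc R :: ('a \<Rightarrow> int) set)) powr p \<le> 14 powr (d * p) * r powr (d * p)"
        using card_Kc_powr[OF rge1, of p] p unfolding d_def R_def by simp
      have "q ^ n \<le> Cq * (real n + 1) powr (- N)" by (rule Cq(2))
      also have "(real n + 1) powr (- N) \<le> (r / (6 * d * s)) powr (- N)"
        using nlow rpos N by (intro powr_mono2') auto
      also have "(r / (6 * d * s)) powr (- N) = (6 * d * s) powr N * r powr (- N)"
        using rge1 d1 s by (simp add: powr_h)
      finally have qn: "q ^ n \<le> Cq * ((6 * d * s) powr N * r powr (- N))" using Cq(1) by (simp add: mult_left_mono)
      have "2 * real (card (Kc R :: ('a \<Rightarrow> int) set)) powr p * \<rho> * q ^ n
          \<le> 2 * (14 powr (d * p) * r powr (d * p)) * \<rho> * (Cq * ((6 * d * s) powr N * r powr (- N)))"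
        using cK qn \<rho> q by (intro mult_mono mult_right_mono mult_left_mono) auto
      also have "\<dots> = C * (r powr (d * p) * r powr (- N))" unfolding C_def by (simp add: mult_ac)
      also have "r powr (d * p) * r powr (- N) = r powr (- 1)" unfolding N_def by (simp add: powr_add[symmetric])
      finally show "2 * real (card (Kc R :: ('a \<Rightarrow> int) set)) powr p * \<rho> * q ^ n \<le> C * r powr (- 1)" .
    qed
    finally show "(\<integral>\<^sup>+\<xi>. Tjk S p j k \<xi> \<partial>P) \<le> ennreal (C * (S * 2 ^ j) powr (- 1))"
      unfolding r_def .
  qed
qed

end

theorem proposition11p1:
  fixes P :: "'a::euclidean_space set measure" and p :: real
  assumes "prob_space P"
    and "sets P = sets N_space"
    and "stationary P"
    and "integrable P (\<lambda>\<xi>. real (card (\<xi> \<inter> unit_cube)))"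
    and "intensity P > 0"
    and "measure P {\<xi>\<in>space P. \<xi> \<noteq> {}} = 1"
    and "p \<ge> 1"
    and "(\<exists>\<alpha>' C0 \<gamma>. \<alpha>' > 0 \<and> C0 > 0 \<and> \<gamma> > p + 1 \<and> rho P \<gamma> < \<infinity> \<and>
            \<alpha>' > real DIM('a) * p * (\<gamma> - 1) / (\<gamma> - 1 - p) \<and>
            (\<forall>x l. l > 0 \<longrightarrow>
               palm_prob P {\<xi>. \<xi> \<inter> Lambda l x = {}} \<le> ennreal (C0 * l powr (-\<alpha>'))))
       \<or> (rho P (1 + p) < \<infinity> \<and> finite_range_dep P)
       \<or> (rho P (1 + p) < \<infinity> \<and> pos_assoc P \<and> (\<exists>\<alpha>. \<alpha> > real DIM('a) * p \<and> condC P \<alpha>))"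
  shows "palm_exp P (\<lambda>\<xi>. deg0_pow \<xi> p) < \<infinity>"
  proof -
  interpret pp P by (rule pp.intro[OF assms(1) assms(2) assms(3)])
  show ?thesis
    using assms(8)
  proof (elim disjE conjE exE)
    fix \<alpha>' C0 \<gamma>
    assume h1: "\<alpha>' > 0" and h2: "C0 > 0" and h3: "\<gamma> > p + 1" and h4: "rho P \<gamma> < \<infinity>"
      and h5: "\<alpha>' > real DIM('a) * p * (\<gamma> - 1) / (\<gamma> - 1 - p)"
      and h6: "\<forall>x l. l > 0 \<longrightarrow> palm_prob P {\<xi>. \<xi> \<inter> Lambda l x = {}} \<le> ennreal (C0 * l powr (-\<alpha>'))"
    show ?thesis by (rule case1[OF assms(7) assms(5) h1 h2 h3 h4 h5 h6])
  next
    assume h1: "rho P (1 + p) < \<infinity>" and h2: "finite_range_dep P"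
    show ?thesis by (rule case2[OF assms(7) assms(5) h1 h2])
  next
    fix \<alpha>
    assume h1: "rho P (1 + p) < \<infinity>" and h2: "pos_assoc P" and h3: "\<alpha> > real DIM('a) * p" and h4: "condC P \<alpha>"
    show ?thesis by (rule case3[OF assms(7) assms(5) h1 h2 h3 h4])
  qed
qed

end
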